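(* Let $\mathscr M$, $\mathscr N$ be modules over $\mathbb Z[\mathbb L]_{\mathrm{loc}}=\mathbb Z[\mathbb L,\mathbb L^{-1},(1-\mathbb L^n)^{-1}, n\ge1]$, and $\mathbf T=(T_1,\dots,T_r)$. If $a(\mathbf T)=\sum a_{\mathbf n}\mathbf T^{\mathbf n}\in\mathscr M[[\mathbf T]]_{\mathrm{int}}$ and $b(\mathbf T)=\sum b_{\mathbf n}\mathbf T^{\mathbf n}\in\mathscr N[[\mathbf T]]_{\mathrm{ssr}}$, then $a(\mathbf T)\otimes_{\mathscr H}b(\mathbf T):=\sum_{\mathbf n}a_{\mathbf n}\otimes b_{\mathbf n}\mathbf T^{\mathbf n}$ lies in $(\mathscr M\otimes_{\mathbb Z[\mathbb L]_{\mathrm{loc}}}\mathscr N)[[\mathbf T]]_{\mathrm{int}}$.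
   Context: For a module $\mathscr M$ over $\mathbb Z[\mathbb L,\mathbb L^{-1}]$, $\mathscr M[[\mathbf T]]_{\mathrm{ssr}}=\mathscr M[\mathbf T][(1-\mathbb L^m\mathbf T^{\mathbf n})^{-1}]_{m\in\mathbb Z_{\le0},\,\mathbf n\in\mathbb N^r\setminus\{0\}}$ (strongly rational series) and $\mathscr M[[\mathbf T]]_{\mathrm{int}}=\mathscr M[\mathbf T][(1-\mathbb L^m\mathbf T^{\mathbf n})^{-1}]_{m\in\mathbb Z_{<0},\,\mathbf n\in\mathbb N^r\setminus\{0\}}$ (integrable series), both regarded as submodules of $\mathscr M[[\mathbf T]]$ via $\frac1{1-\mathbb L^m\mathbf T^{\mathbf n}}=\sum_{l\ge0}(\mathbb L^m\mathbf T^{\mathbf n})^l$. *)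

theory Defs
  imports Main "HOL-Computational_Algebra.Polynomial" "HOL-Computational_Algebra.Fraction_Field"
begin

section \<open>The ring Z[L]_loc = Z[L, L^-1, (1 - L^n)^-1 (n >= 1)]\<close>

text \<open>Realised as the subring of the fraction field Q(L) = Frac(Z[L]) consisting of
 fractions p / (L^k * prod_{n in A} (1 - L^n)) with A a finite multiset of positive integers.\<close>

definition zden :: "nat \<Rightarrow> nat multiset \<Rightarrow> int poly" where
  "zden k A = monom 1 k * prod_mset (image_mset (\<lambda>n. 1 - monom 1 n) A)"

definition zloc_set :: "int poly fract set" where
  "zloc_set = {Fract p (zden k A) | p k A. \<forall>n\<in>#A. 0 < n}"

lemma one_minus_monom_nz: "0 < n \<Longrightarrow> (1 - monom (1::int) n) \<noteq> 0"
proof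
  assume "0 < n" "1 - monom (1::int) n = 0"
  hence "coeff (1 - monom (1::int) n) n = 0" by simp
  with \<open>0 < n\<close> show False by (simp add: coeff_monom)
qed

lemma zden_nz: "\<forall>n\<in>#A. 0 < n \<Longrightarrow> zden k A \<noteq> 0"
  unfolding zden_def using one_minus_monom_nz
  by (auto simp: prod_mset_zero_iff monom_eq_0_iff)

lemma zden_mult: "zden k A * zden j B = zden (k + j) (A + B)"
  unfolding zden_def by (simp add: mult_monom algebra_simps)

lemma zloc_add: "x \<in> zloc_set \<Longrightarrow> y \<in> zloc_set \<Longrightarrow> x + y \<in> zloc_set"
  unfolding zloc_set_def
proof clarify
  fix p q :: "int poly" and k j :: nat and A B :: "nat multiset" assume A: "\<forall>n\<in>#A. 0 < n" and B: "\<forall>n\<in>#B. 0 < n"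
  have "Fract p (zden k A) + Fract q (zden j B) =
        Fract (p * zden j B + q * zden k A) (zden (k + j) (A + B))"
    using zden_nz[OF A] zden_nz[OF B] by (simp add: zden_mult)
  moreover have "\<forall>n\<in>#A + B. 0 < n" using A B by auto
  ultimately show "\<exists>r m C. Fract p (zden k A) + Fract q (zden j B) = Fract r (zden m C) \<and> (\<forall>n\<in>#C. 0 < n)"
    by blast
qed

lemma zloc_mult: "x \<in> zloc_set \<Longrightarrow> y \<in> zloc_set \<Longrightarrow> x * y \<in> zloc_set"
  unfolding zloc_set_def
proof clarify
  fix p q :: "int poly" and k j :: nat and A B :: "nat multiset" assume A: "\<forall>n\<in>#A. 0 < n" and B: "\<forall>n\<in>#B. 0 < n"
  have "Fract p (zden k A) * Fract q (zden j B) = Fract (p * q) (zden (k + j) (A + B))"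
    by (simp add: zden_mult)
  moreover have "\<forall>n\<in>#A + B. 0 < n" using A B by auto
  ultimately show "\<exists>r m C. Fract p (zden k A) * Fract q (zden j B) = Fract r (zden m C) \<and> (\<forall>n\<in>#C. 0 < n)"
    by blast
qed

lemma zloc_uminus: "x \<in> zloc_set \<Longrightarrow> - x \<in> zloc_set"
  unfolding zloc_set_def by (auto, metis minus_fract)

lemma zloc_zero: "0 \<in> zloc_set"
  unfolding zloc_set_def Zero_fract_def
  by (rule CollectI, rule exI[of _ 0], rule exI[of _ 0], rule exI[of _ "{#}"]) (simp add: zden_def)

lemma zloc_one: "1 \<in> zloc_set"
  unfolding zloc_set_def One_fract_def
  by (rule CollectI, rule exI[of _ 1], rule exI[of _ 0], rule exI[of _ "{#}"]) (simp add: zden_def)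

typedef zloc = zloc_set
  using zloc_zero by blast

setup_lifting type_definition_zloc

instantiation zloc :: comm_ring_1
begin
lift_definition zero_zloc :: zloc is 0 by (rule zloc_zero)
lift_definition one_zloc :: zloc is 1 by (rule zloc_one)
lift_definition plus_zloc :: "zloc \<Rightarrow> zloc \<Rightarrow> zloc" is "(+)" by (rule zloc_add)
lift_definition times_zloc :: "zloc \<Rightarrow> zloc \<Rightarrow> zloc" is "(*)" by (rule zloc_mult)
lift_definition uminus_zloc :: "zloc \<Rightarrow> zloc" is uminus by (rule zloc_uminus)
lift_definition minus_zloc :: "zloc \<Rightarrow> zloc \<Rightarrow> zloc" is "(-)"
  by (metis diff_conv_add_uminus zloc_add zloc_uminus)
instance
  by standard (transfer; simp add: algebra_simps)+
end

lift_definition Lpow :: "int \<Rightarrow> zloc" is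
  "\<lambda>m. if 0 \<le> m then Fract (monom 1 (nat m)) 1 else Fract 1 (monom 1 (nat (- m)))"
proof -
  fix m :: int
  have a: "Fract (monom 1 (nat m)) 1 \<in> zloc_set" unfolding zloc_set_def
    by (rule CollectI, rule exI[of _ "monom 1 (nat m)"], rule exI[of _ 0], rule exI[of _ "{#}"])
       (simp add: zden_def)
  have b: "Fract 1 (monom 1 (nat (- m))) \<in> zloc_set" unfolding zloc_set_def
    by (rule CollectI, rule exI[of _ 1], rule exI[of _ "nat (- m)"], rule exI[of _ "{#}"])
       (simp add: zden_def)
  show "(if 0 \<le> m then Fract (monom 1 (nat m)) 1 else Fract 1 (monom 1 (nat (- m)))) \<in> zloc_set"
    using a b by simp
qed

text \<open>A series sum_n f_n T^n with coefficients in a module is a function from exponent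
 vectors ('r => nat, 'r a finite index type of size r) to the module.
 geom_mul scale c n f is f(T) * 1/(1 - c T^n) = f(T) * sum_l (c T^n)^l.\<close>

definition geom_mul :: "('a::comm_ring_1 \<Rightarrow> 'm::ab_group_add \<Rightarrow> 'm) \<Rightarrow> 'a \<Rightarrow> ('r::finite \<Rightarrow> nat)
     \<Rightarrow> (('r \<Rightarrow> nat) \<Rightarrow> 'm) \<Rightarrow> (('r \<Rightarrow> nat) \<Rightarrow> 'm)" where
  "geom_mul scale c n f =
     (\<lambda>k. \<Sum>l\<in>{l::nat. \<forall>i. l * n i \<le> k i}. scale (c ^ l) (f (\<lambda>i. k i - l * n i)))"

text \<open>Elements of M[T][(1 - L^m T^n)^-1]_{(m,n) in S} expanded in M[[T]]: a polynomial
 P in M[T] times finitely many geometric series 1/(1 - L^m T^n) with (m,n) in S.\<close>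

definition localized_series ::
  "(int \<Rightarrow> bool) \<Rightarrow> (zloc \<Rightarrow> 'm::ab_group_add \<Rightarrow> 'm) \<Rightarrow> (('r::finite \<Rightarrow> nat) \<Rightarrow> 'm) \<Rightarrow> bool" where
  "localized_series cond scale f \<longleftrightarrow>
     (\<exists>P ds. finite {k. P k \<noteq> 0} \<and> (\<forall>(m, n)\<in>set ds. cond m \<and> n \<noteq> (\<lambda>_. 0)) \<and>
        f = foldr (\<lambda>(m, n). geom_mul scale (Lpow m) n) ds P)"

definition is_ssr :: "(zloc \<Rightarrow> 'm::ab_group_add \<Rightarrow> 'm) \<Rightarrow> (('r::finite \<Rightarrow> nat) \<Rightarrow> 'm) \<Rightarrow> bool" where
  "is_ssr scale f \<longleftrightarrow> localized_series (\<lambda>m. m \<le> 0) scale f"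

definition is_int :: "(zloc \<Rightarrow> 'm::ab_group_add \<Rightarrow> 'm) \<Rightarrow> (('r::finite \<Rightarrow> nat) \<Rightarrow> 'm) \<Rightarrow> bool" where
  "is_int scale f \<longleftrightarrow> localized_series (\<lambda>m. m < 0) scale f"

definition zloc_bilinear :: "(zloc \<Rightarrow> 'm::ab_group_add \<Rightarrow> 'm) \<Rightarrow> (zloc \<Rightarrow> 'n::ab_group_add \<Rightarrow> 'n)
     \<Rightarrow> (zloc \<Rightarrow> 'p::ab_group_add \<Rightarrow> 'p) \<Rightarrow> ('m \<Rightarrow> 'n \<Rightarrow> 'p) \<Rightarrow> bool" where
  "zloc_bilinear sM sN sP t \<longleftrightarrow>
     (\<forall>y. module_hom sM sP (\<lambda>x. t x y)) \<and> (\<forall>x. module_hom sN sP (t x))"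

end

theory Submission
  imports Defs
begin


definition bnd :: "nat \<Rightarrow> (nat \<Rightarrow> nat) \<Rightarrow> bool" where
  "bnd h f \<longleftrightarrow> (\<forall>i\<ge>h. f i = 0)"

lemma finite_bnd_bounded: "finite {f. bnd h f \<and> (\<forall>i. f i \<le> M)}"
proof (induction h)
  case 0
  have "{f. bnd 0 f \<and> (\<forall>i. f i \<le> M)} \<subseteq> {\<lambda>_. 0}" by (auto simp: bnd_def)
  then show ?case using finite_subset by blast
next
  case (Suc h)
  have "{f. bnd (Suc h) f \<and> (\<forall>i. f i \<le> M)} \<subseteq>
        (\<lambda>(f, c). f(h := c)) ` ({f. bnd h f \<and> (\<forall>i. f i \<le> M)} \<times> {..M})"
  proof
    fix f assume f: "f \<in> {f. bnd (Suc h) f \<and> (\<forall>i. f i \<le> M)}"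
    hence "f = (\<lambda>(g, c). g(h := c)) (f(h := 0), f h)" by auto
    moreover have "(f(h := 0), f h) \<in> {f. bnd h f \<and> (\<forall>i. f i \<le> M)} \<times> {..M}"
      using f by (auto simp: bnd_def)
    ultimately show "f \<in> (\<lambda>(f, c). f(h := c)) ` ({f. bnd h f \<and> (\<forall>i. f i \<le> M)} \<times> {..M})"
      by blast
  qed
  then show ?case using Suc finite_subset by blast
qed

lemma Lpow_0: "Lpow 0 = 1"
  by transfer (simp add: One_fract_def)

lemma monfr_eq: "int a - int b = int c - int d \<Longrightarrow>
   Fract (monom (1::int) a) (monom 1 b) = Fract (monom 1 c) (monom 1 d)"
proof -
  assume h: "int a - int b = int c - int d"
  hence "a + d = c + b" by linarith
  hence "monom (1::int) a * monom 1 d = monom 1 c * monom 1 b" by (simp add: mult_monom)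
  thus ?thesis by (simp add: eq_fract monom_eq_0_iff)
qed

lemma Lpow_rep: "Rep_zloc (Lpow m) = Fract (monom 1 a) (monom 1 b)" if "int a - int b = m"
proof -
  have "Rep_zloc (Lpow m) = (if 0 \<le> m then Fract (monom 1 (nat m)) 1 else Fract 1 (monom 1 (nat (- m))))"
    by (simp add: Lpow.rep_eq)
  also have "\<dots> = Fract (monom 1 a) (monom 1 b)"
  proof (cases "0 \<le> m")
    case True
    have "Fract (monom (1::int) (nat m)) 1 = Fract (monom 1 (nat m)) (monom 1 0)" by (simp add: one_poly_eq_simps)
    also have "\<dots> = Fract (monom 1 a) (monom 1 b)" by (rule monfr_eq) (use that True in linarith)
    finally show ?thesis using True by simp
  next
    case False
    have "Fract (1::int poly) (monom 1 (nat (-m))) = Fract (monom 1 0) (monom 1 (nat (-m)))" by (simp add: one_poly_eq_simps)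
    also have "\<dots> = Fract (monom 1 a) (monom 1 b)" by (rule monfr_eq) (use that False in linarith)
    finally show ?thesis using False by simp
  qed
  finally show ?thesis .
qed

lemma Lpow_add: "Lpow (a + b) = Lpow a * Lpow b"
proof -
  obtain a1 a2 where A: "int a1 - int a2 = a" by (metis diff_0_right diff_minus_eq_add minus_diff_eq nonneg_int_cases neg_int_cases add.commute zero_le_imp_eq_int diff_zero int_cases)
  obtain b1 b2 where B: "int b1 - int b2 = b" by (metis diff_0_right diff_minus_eq_add minus_diff_eq nonneg_int_cases neg_int_cases add.commute zero_le_imp_eq_int diff_zero int_cases)
  have "Rep_zloc (Lpow (a+b)) = Fract (monom 1 (a1+b1)) (monom 1 (a2+b2))"
    by (rule Lpow_rep) (use A B in auto)
  also have "\<dots> = Rep_zloc (Lpow a) * Rep_zloc (Lpow b)"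
    using Lpow_rep[OF A] Lpow_rep[OF B] by (simp add: mult_monom)
  also have "\<dots> = Rep_zloc (Lpow a * Lpow b)" by (simp add: times_zloc.rep_eq)
  finally show ?thesis by (simp add: Rep_zloc_inject)
qed

lemma Lpow_pow: "Lpow m ^ l = Lpow (int l * m)"
  by (induction l) (auto simp: Lpow_0 Lpow_add algebra_simps)


definition vlin :: "nat \<Rightarrow> (nat \<Rightarrow> 'r \<Rightarrow> nat) \<Rightarrow> (nat \<Rightarrow> nat) \<Rightarrow> 'r \<Rightarrow> nat" where
  "vlin h c f = (\<lambda>j. \<Sum>i<h. f i * c i j)"

definition ilin :: "nat \<Rightarrow> (nat \<Rightarrow> int) \<Rightarrow> (nat \<Rightarrow> nat) \<Rightarrow> int" where
  "ilin h c f = (\<Sum>i<h. int (f i) * c i)"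

definition Lam :: "nat \<Rightarrow> (nat \<Rightarrow> 'r \<Rightarrow> nat) \<Rightarrow> ('r \<Rightarrow> nat) \<Rightarrow> (nat \<Rightarrow> nat) set" where
  "Lam h c k = {f. bnd h f \<and> (\<forall>j. vlin h c f j \<le> k j)}"

abbreviation GM where "GM sc ds P \<equiv> foldr (\<lambda>(m, n). geom_mul sc (Lpow m) n) ds P"

lemma finite_Lam:
  fixes c :: "nat \<Rightarrow> 'r::finite \<Rightarrow> nat"
  assumes "\<forall>i<h. c i \<noteq> (\<lambda>_. 0)"
  shows "finite (Lam h c k)"
proof -
  have "Lam h c k \<subseteq> {f. bnd h f \<and> (\<forall>i. f i \<le> (\<Sum>j\<in>UNIV. k j))}"
  proof (clarsimp simp: Lam_def)
    fix f i assume b: "bnd h f" and le: "\<forall>j. vlin h c f j \<le> k j"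
    show "f i \<le> (\<Sum>j\<in>UNIV. k j)"
    proof (cases "i < h")
      case True
      then obtain j where j: "c i j \<noteq> 0" using assms by fastforce
      have "f i \<le> f i * c i j" using j by simp
      also have "\<dots> \<le> vlin h c f j" unfolding vlin_def
        using True by (intro member_le_sum) auto
      also have "\<dots> \<le> k j" using le by auto
      also have "\<dots> \<le> (\<Sum>j\<in>UNIV. k j)" by (intro member_le_sum) auto
      finally show ?thesis .
    next
      case False thus ?thesis using b by (simp add: bnd_def)
    qed
  qed
  thus ?thesis using finite_bnd_bounded finite_subset by fast
qed

lemma vlin_Suc: "vlin (Suc h) c (case_nat l f) = (\<lambda>j. l * c 0 j + vlin h (\<lambda>i. c (Suc i)) f j)"
  unfolding vlin_def sum.lessThan_Suc_shift by simp

lemma ilin_Suc: "ilin (Suc h) c (case_nat l f) = int l * c 0 + ilin h (\<lambda>i. c (Suc i)) f"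
  unfolding ilin_def sum.lessThan_Suc_shift by simp

lemma bnd_Suc: "bnd (Suc h) (case_nat l f) \<longleftrightarrow> bnd h f"
  unfolding bnd_def by (auto split: nat.splits)

lemma Lam_Suc_bij:
  "bij_betw (\<lambda>(l, f). case_nat l f)
     (SIGMA l:{l. \<forall>i. l * c 0 i \<le> k i}. Lam h (\<lambda>i. c (Suc i)) (\<lambda>i. k i - l * c 0 i))
     (Lam (Suc h) c k)"
proof (rule bij_betw_byWitness[where f' = "\<lambda>g. (g 0, \<lambda>i. g (Suc i))"])
  show "(\<lambda>(l, f). case_nat l f) ` (SIGMA l:{l. \<forall>i. l * c 0 i \<le> k i}. Lam h (\<lambda>i. c (Suc i)) (\<lambda>i. k i - l * c 0 i)) \<subseteq> Lam (Suc h) c k"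
    by (auto simp: Lam_def vlin_Suc bnd_Suc) (metis add.commute le_diff_conv2)
  show "(\<lambda>g. (g 0, \<lambda>i. g (Suc i))) ` Lam (Suc h) c k \<subseteq> (SIGMA l:{l. \<forall>i. l * c 0 i \<le> k i}. Lam h (\<lambda>i. c (Suc i)) (\<lambda>i. k i - l * c 0 i))"
  proof (rule image_subsetI)
    fix g assume g: "g \<in> Lam (Suc h) c k"
    have geq: "g = case_nat (g 0) (\<lambda>i. g (Suc i))" by (auto split: nat.splits)
    from g have "bnd (Suc h) (case_nat (g 0) (\<lambda>i. g (Suc i)))" "\<forall>j. vlin (Suc h) c (case_nat (g 0) (\<lambda>i. g (Suc i))) j \<le> k j"
      unfolding Lam_def by (subst (asm) geq; simp)+
    thus "(g 0, \<lambda>i. g (Suc i)) \<in> (SIGMA l:{l. \<forall>i. l * c 0 i \<le> k i}. Lam h (\<lambda>i. c (Suc i)) (\<lambda>i. k i - l * c 0 i))"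
      unfolding Lam_def vlin_Suc bnd_Suc
    proof (clarsimp)
      assume "\<forall>j. g 0 * c 0 j + vlin h (\<lambda>i. c (Suc i)) (\<lambda>i. g (Suc i)) j \<le> k j"
      hence "\<And>j. g 0 * c 0 j + vlin h (\<lambda>i. c (Suc i)) (\<lambda>i. g (Suc i)) j \<le> k j" by blast
      thus "(\<forall>i. g 0 * c 0 i \<le> k i) \<and> (\<forall>j. vlin h (\<lambda>i. c (Suc i)) (\<lambda>i. g (Suc i)) j \<le> k j - g 0 * c 0 j)"
        by (metis add_leD1 le_diff_conv2 add.commute)
    qed
  qed
qed (auto split: nat.splits)

lemma finite_geom_idx:
  fixes n :: "'r \<Rightarrow> nat"
  assumes "n \<noteq> (\<lambda>_. 0)" shows "finite {l::nat. \<forall>i. l * n i \<le> k i}"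
proof -
  obtain i0 where "n i0 \<noteq> 0" using assms by fastforce
  hence "{l::nat. \<forall>i. l * n i \<le> k i} \<subseteq> {..k i0}"
    by auto (metis le_trans mult_le_mono1 mult_1_right not_less_eq_eq Suc_leI neq0_conv mult.commute mult_le_cancel1 nat_mult_1)
  thus ?thesis using finite_subset by blast
qed

lemma GM_expand:
  fixes ds :: "(int \<times> ('r::finite \<Rightarrow> nat)) list"
  assumes sc: "module sc" and nz: "\<forall>(m,n)\<in>set ds. n \<noteq> (\<lambda>_. 0)"
  shows "GM sc ds P k = (\<Sum>f\<in>Lam (length ds) (\<lambda>i. snd (ds!i)) k.
     sc (Lpow (ilin (length ds) (\<lambda>i. fst (ds!i)) f)) (P (\<lambda>j. k j - vlin (length ds) (\<lambda>i. snd (ds!i)) f j)))"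
  using nz
proof (induction ds arbitrary: k)
  case Nil
  have L: "Lam 0 (\<lambda>i. snd ([]!i)) k = {\<lambda>_. 0}" by (auto simp: Lam_def bnd_def vlin_def)
  show ?case by (simp only: list.size(3) L) (simp add: ilin_def vlin_def Lpow_0 module.scale_one[OF sc])
next
  case (Cons d ds)
  obtain m n where d: "d = (m, n)" by fastforce
  have n0: "n \<noteq> (\<lambda>_. 0)" using Cons.prems d by auto
  have nzs: "\<forall>(m,n)\<in>set ds. n \<noteq> (\<lambda>_. 0)" using Cons.prems by auto
  have nzi: "\<forall>i<length ds. snd (ds!i) \<noteq> (\<lambda>_. 0)" using nzs by (auto dest!: nth_mem)
  define h where "h = length ds"
  define c where "c = (\<lambda>i. snd ((d#ds)!i))"
  define e where "e = (\<lambda>i. fst ((d#ds)!i))"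
  have c0: "c 0 = n" and cS: "(\<lambda>i. c (Suc i)) = (\<lambda>i. snd (ds!i))" by (auto simp: c_def d)
  have e0: "e 0 = m" and eS: "(\<lambda>i. e (Suc i)) = (\<lambda>i. fst (ds!i))" by (auto simp: e_def d)
  let ?F = "\<lambda>f. sc (Lpow (ilin (Suc h) e f)) (P (\<lambda>j. k j - vlin (Suc h) c f j))"
  have "GM sc (d#ds) P k = geom_mul sc (Lpow m) n (GM sc ds P) k" by (simp add: d)
  also have "\<dots> = (\<Sum>l\<in>{l. \<forall>i. l * n i \<le> k i}. sc (Lpow m ^ l) (GM sc ds P (\<lambda>i. k i - l * n i)))"
    by (simp only: geom_mul_def)
  also have "\<dots> = (\<Sum>l\<in>{l. \<forall>i. l * n i \<le> k i}. sc (Lpow m ^ l)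
       (\<Sum>f\<in>Lam h (\<lambda>i. c (Suc i)) (\<lambda>i. k i - l * n i).
          sc (Lpow (ilin h (\<lambda>i. e (Suc i)) f)) (P (\<lambda>j. (k j - l * n j) - vlin h (\<lambda>i. c (Suc i)) f j))))"
    by (intro sum.cong refl arg_cong[where f="sc _"]) (simp add: Cons.IH[OF nzs] cS eS h_def)
  also have "\<dots> = (\<Sum>l\<in>{l. \<forall>i. l * n i \<le> k i}. \<Sum>f\<in>Lam h (\<lambda>i. c (Suc i)) (\<lambda>i. k i - l * c 0 i).
          ?F (case_nat l f))"
    by (intro sum.cong refl) (simp add: module.scale_sum_right[OF sc] module.scale_scale[OF sc]
         Lpow_pow Lpow_add[symmetric] ilin_Suc vlin_Suc c0 e0 diff_diff_left)
  also have "\<dots> = (\<Sum>(l,f)\<in>(SIGMA l:{l. \<forall>i. l * c 0 i \<le> k i}. Lam h (\<lambda>i. c (Suc i)) (\<lambda>i. k i - l * c 0 i)). ?F (case_nat l f))"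
    using finite_geom_idx[OF n0] finite_Lam[of "length ds" "\<lambda>i. snd (ds!i)", OF nzi]
    by (subst sum.Sigma) (auto simp: c0 cS h_def)
  also have "\<dots> = (\<Sum>g\<in>Lam (Suc h) c k. ?F g)"
    using sum.reindex_bij_betw[OF Lam_Suc_bij, of ?F c k h] by (simp add: case_prod_unfold)
  finally show ?case by (simp add: c_def e_def h_def)
qed

lemma module_self: "module ((*) :: 'a::comm_ring_1 \<Rightarrow> 'a \<Rightarrow> 'a)"
  by standard (simp_all add: algebra_simps)

definition dc :: "(int \<times> ('r \<Rightarrow> nat)) list \<Rightarrow> nat \<Rightarrow> 'r \<Rightarrow> nat" where "dc ds = (\<lambda>i. snd (ds!i))"
definition de :: "(int \<times> ('r \<Rightarrow> nat)) list \<Rightarrow> nat \<Rightarrow> int" where "de ds = (\<lambda>i. fst (ds!i))"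

definition nzds :: "(int \<times> ('r \<Rightarrow> nat)) list \<Rightarrow> bool" where
  "nzds ds \<longleftrightarrow> (\<forall>(m,n)\<in>set ds. n \<noteq> (\<lambda>_. 0))"

lemma nzds_dc: "nzds ds \<Longrightarrow> \<forall>i<length ds. dc ds i \<noteq> (\<lambda>_. 0)"
  unfolding nzds_def dc_def by (auto dest!: nth_mem)

lemma GM_expand':
  fixes ds :: "(int \<times> ('r::finite \<Rightarrow> nat)) list"
  assumes "module sc" "nzds ds"
  shows "GM sc ds P k = (\<Sum>f\<in>Lam (length ds) (dc ds) k.
     sc (Lpow (ilin (length ds) (de ds) f)) (P (\<lambda>j. k j - vlin (length ds) (dc ds) f j)))"
  using GM_expand[OF assms(1), of ds P k] assms(2) unfolding nzds_def dc_def de_def by simp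

lemma nat_le_aux: "(v::nat) \<le> k \<Longrightarrow> (x \<le> k \<and> v \<le> k - x) \<longleftrightarrow> x \<le> k - v" by arith

definition inC :: "(int \<times> ('r::finite \<Rightarrow> nat)) list \<Rightarrow> (('r \<Rightarrow> nat) \<Rightarrow> zloc) \<Rightarrow> bool" where
  "inC ds F \<longleftrightarrow> (\<exists>R. finite {k. R k \<noteq> 0} \<and> F = GM (*) ds R)"

lemma inC_add:
  assumes nz: "nzds ds" and F: "inC ds F" and G: "inC ds G"
  shows "inC ds (\<lambda>k. F k + G k)"
proof -
  obtain R where R: "finite {k. R k \<noteq> 0}" "F = GM (*) ds R" using F by (auto simp: inC_def)
  obtain R' where R': "finite {k. R' k \<noteq> 0}" "G = GM (*) ds R'" using G by (auto simp: inC_def)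
  have "finite {k. R k + R' k \<noteq> 0}"
    by (rule finite_subset[OF _ finite_UnI[OF R(1) R'(1)]]) auto
  moreover have "(\<lambda>k. F k + G k) = GM (*) ds (\<lambda>k. R k + R' k)"
    by (rule ext) (simp add: R(2) R'(2) GM_expand'[OF module_self nz] sum.distrib algebra_simps)
  ultimately show ?thesis unfolding inC_def by (intro exI[of _ "\<lambda>k. R k + R' k"]) simp
qed

lemma inC_zero: "nzds ds \<Longrightarrow> inC ds (\<lambda>k. 0)"
  unfolding inC_def by (rule exI[of _ "\<lambda>k. 0"]) (auto simp: GM_expand'[OF module_self])

lemma inC_sum:
  assumes nz: "nzds ds" and "\<And>x. x \<in> X \<Longrightarrow> inC ds (F x)"
  shows "inC ds (\<lambda>k. \<Sum>x\<in>X. F x k)"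
  using assms(2)
proof (induction X rule: infinite_finite_induct)
  case (infinite A) thus ?case using inC_zero[OF nz] by simp
next
  case empty thus ?case using inC_zero[OF nz] by simp
next
  case (insert x F) thus ?case using inC_add[OF nz] by simp
qed

lemma inC_shift:
  fixes ds :: "(int \<times> ('r::finite \<Rightarrow> nat)) list"
  assumes nz: "nzds ds" and F: "inC ds F"
  shows "inC ds (\<lambda>k. if (\<forall>j. v j \<le> k j) then c * F (\<lambda>j. k j - v j) else 0)"
proof -
  obtain R where R: "finite {k. R k \<noteq> 0}" "F = GM (*) ds R" using F by (auto simp: inC_def)
  define R' where "R' = (\<lambda>k. if (\<forall>j. v j \<le> k j) then c * R (\<lambda>j. k j - v j) else 0)"
  have "{k. R' k \<noteq> 0} \<subseteq> (\<lambda>k' j. k' j + v j) ` {k. R k \<noteq> 0}"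
  proof
    fix k assume "k \<in> {k. R' k \<noteq> 0}"
    hence k: "\<forall>j. v j \<le> k j" "R (\<lambda>j. k j - v j) \<noteq> 0" by (auto simp: R'_def split: if_splits)
    hence "k = (\<lambda>j. (k j - v j) + v j)" by auto
    thus "k \<in> (\<lambda>k' j. k' j + v j) ` {k. R k \<noteq> 0}" using k by (intro image_eqI[where x="\<lambda>j. k j - v j"]) auto
  qed
  hence fin: "finite {k. R' k \<noteq> 0}" using R(1) finite_subset by blast
  let ?h = "length ds" and ?c = "dc ds" and ?e = "de ds"
  have "(\<lambda>k. if (\<forall>j. v j \<le> k j) then c * F (\<lambda>j. k j - v j) else 0) = GM (*) ds R'"
  proof
    fix k
    have finL: "finite (Lam ?h ?c k)" using finite_Lam nzds_dc[OF nz] by blast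
    have "GM (*) ds R' k = (\<Sum>f\<in>Lam ?h ?c k. Lpow (ilin ?h ?e f) *
        (if (\<forall>j. v j \<le> k j - vlin ?h ?c f j) then c * R (\<lambda>j. k j - vlin ?h ?c f j - v j) else 0))"
      by (simp add: GM_expand'[OF module_self nz] R'_def)
    also have "\<dots> = (\<Sum>f\<in>{f\<in>Lam ?h ?c k. \<forall>j. v j \<le> k j - vlin ?h ?c f j}.
        Lpow (ilin ?h ?e f) * (c * R (\<lambda>j. k j - vlin ?h ?c f j - v j)))"
      by (subst sum.inter_filter[OF finL]) (auto intro!: sum.cong)
    also have "\<dots> = (if (\<forall>j. v j \<le> k j) then c * F (\<lambda>j. k j - v j) else 0)"
    proof (cases "\<forall>j. v j \<le> k j")
      case True
      have "{f\<in>Lam ?h ?c k. \<forall>j. v j \<le> k j - vlin ?h ?c f j} = Lam ?h ?c (\<lambda>j. k j - v j)"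
      proof (intro set_eqI iffI)
        fix f assume "f \<in> {f\<in>Lam ?h ?c k. \<forall>j. v j \<le> k j - vlin ?h ?c f j}"
        thus "f \<in> Lam ?h ?c (\<lambda>j. k j - v j)" unfolding Lam_def
          using True by clarsimp (metis nat_le_aux)
      next
        fix f assume "f \<in> Lam ?h ?c (\<lambda>j. k j - v j)"
        thus "f \<in> {f\<in>Lam ?h ?c k. \<forall>j. v j \<le> k j - vlin ?h ?c f j}" unfolding Lam_def
          using True by clarsimp (metis nat_le_aux)
      qed
      thus ?thesis using True
        by (simp add: R(2) GM_expand'[OF module_self nz] sum_distrib_left algebra_simps diff_diff_left add.commute)
    next
      case False
      have E: "{f\<in>Lam ?h ?c k. \<forall>j. v j \<le> k j - vlin ?h ?c f j} = {}"
      proof -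
        obtain j0 where "\<not> v j0 \<le> k j0" using False by blast
        thus ?thesis by (auto simp: Lam_def) (meson diff_le_self le_trans)
      qed
      show ?thesis by (subst E) (simp add: False)
    qed
    finally show "(if (\<forall>j. v j \<le> k j) then c * F (\<lambda>j. k j - v j) else 0) = GM (*) ds R' k" by simp
  qed
  thus ?thesis using fin unfolding inC_def by (intro exI[of _ R']) simp
qed

lemma vlin_add: "vlin h c (\<lambda>i. a i + b i) = (\<lambda>j. vlin h c a j + vlin h c b j)"
  unfolding vlin_def by (simp add: sum.distrib algebra_simps)

lemma ilin_add: "ilin h c (\<lambda>i. a i + b i) = ilin h c a + ilin h c b"
  unfolding ilin_def by (simp add: sum.distrib algebra_simps)

lemma vlin_mono: "(\<forall>i. a i \<le> b i) \<Longrightarrow> vlin h c a j \<le> vlin h c b j"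
  unfolding vlin_def by (intro sum_mono mult_le_mono1) auto

definition gf :: "(int \<times> ('r \<Rightarrow> nat)) list \<Rightarrow> (nat \<Rightarrow> nat) set \<Rightarrow> ('r \<Rightarrow> nat) \<Rightarrow> zloc" where
  "gf ds A k = (\<Sum>f\<in>{f\<in>A. bnd (length ds) f \<and> vlin (length ds) (dc ds) f = k}. Lpow (ilin (length ds) (de ds) f))"

lemma finite_fib:
  fixes ds :: "(int \<times> ('r::finite \<Rightarrow> nat)) list"
  assumes "nzds ds" shows "finite {f\<in>A. bnd (length ds) f \<and> vlin (length ds) (dc ds) f = k}"
  by (rule finite_subset[OF _ finite_Lam[OF nzds_dc[OF assms], of k]]) (auto simp: Lam_def)

lemma gf_all:
  fixes ds :: "(int \<times> ('r::finite \<Rightarrow> nat)) list"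
  assumes nz: "nzds ds" shows "inC ds (gf ds UNIV)"
proof -
  define R :: "('r \<Rightarrow> nat) \<Rightarrow> zloc" where "R = (\<lambda>k. if k = (\<lambda>_. 0) then 1 else 0)"
  have fin: "finite {k. R k \<noteq> 0}" by (rule finite_subset[of _ "{\<lambda>_. 0}"]) (auto simp: R_def)
  have "gf ds UNIV = GM (*) ds R"
  proof
    fix k
    let ?h = "length ds" and ?c = "dc ds" and ?e = "de ds"
    have finL: "finite (Lam ?h ?c k)" using finite_Lam nzds_dc[OF nz] by blast
    have "GM (*) ds R k = (\<Sum>f\<in>Lam ?h ?c k. Lpow (ilin ?h ?e f) * (if (\<lambda>j. k j - vlin ?h ?c f j) = (\<lambda>_. 0) then 1 else 0))"
      by (simp add: GM_expand'[OF module_self nz] R_def)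
    also have "\<dots> = (\<Sum>f\<in>{f\<in>Lam ?h ?c k. (\<lambda>j. k j - vlin ?h ?c f j) = (\<lambda>_. 0)}. Lpow (ilin ?h ?e f))"
      by (subst sum.inter_filter[OF finL]) (auto intro!: sum.cong)
    also have "{f\<in>Lam ?h ?c k. (\<lambda>j. k j - vlin ?h ?c f j) = (\<lambda>_. 0)} = {f\<in>UNIV. bnd ?h f \<and> vlin ?h ?c f = k}"
    proof (intro set_eqI iffI)
      fix f assume "f \<in> {f\<in>Lam ?h ?c k. (\<lambda>j. k j - vlin ?h ?c f j) = (\<lambda>_. 0)}"
      hence "bnd ?h f" "\<forall>j. vlin ?h ?c f j \<le> k j" "\<forall>j. k j - vlin ?h ?c f j = 0"
        by (auto simp: Lam_def fun_eq_iff)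
      thus "f \<in> {f\<in>UNIV. bnd ?h f \<and> vlin ?h ?c f = k}" by (auto simp: fun_eq_iff intro: le_antisym)
    qed (auto simp: Lam_def)
    finally show "gf ds UNIV k = GM (*) ds R k" by (simp add: gf_def)
  qed
  thus ?thesis using fin unfolding inC_def by (intro exI[of _ R]) simp
qed

lemma gf_avoid:
  fixes ds :: "(int \<times> ('r::finite \<Rightarrow> nat)) list"
  assumes nz: "nzds ds"
  shows "finite B \<Longrightarrow> (\<forall>\<beta>\<in>B. bnd (length ds) \<beta>) \<Longrightarrow> inC ds (gf ds {f. \<not>(\<exists>\<beta>\<in>B. \<forall>i. \<beta> i \<le> f i)})"
proof (induction "card B" arbitrary: B rule: less_induct)
  case less
  let ?h = "length ds" and ?c = "dc ds" and ?e = "de ds"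
  show ?case
  proof (cases "B = {}")
    case True
    thus ?thesis using gf_all[OF nz] by simp
  next
    case False
    then obtain \<beta> where b: "\<beta> \<in> B" by blast
    define B0 where "B0 = B - {\<beta>}"
    define B1 where "B1 = (\<lambda>\<gamma> j. \<gamma> j - \<beta> j) ` B0"
    have cB0: "card B0 < card B" using b less.prems by (simp add: B0_def) (metis card_gt_0_iff diff_Suc_less empty_iff)
    have cB1: "card B1 < card B" unfolding B1_def using cB0 card_image_le[of B0 "\<lambda>\<gamma> j. \<gamma> j - \<beta> j"] less.prems by (simp add: B0_def)
    have bB: "bnd ?h \<beta>" using b less.prems by auto
    have IH0: "inC ds (gf ds {f. \<not>(\<exists>\<gamma>\<in>B0. \<forall>i. \<gamma> i \<le> f i)})"
      using less.hyps[OF cB0] less.prems by (auto simp: B0_def)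
    have IH1: "inC ds (gf ds {f. \<not>(\<exists>\<gamma>\<in>B1. \<forall>i. \<gamma> i \<le> f i)})"
    proof -
      have "finite B1" "\<forall>\<gamma>\<in>B1. bnd ?h \<gamma>" using less.prems by (auto simp: B1_def B0_def bnd_def)
      thus ?thesis using less.hyps[OF cB1] by blast
    qed
    define A0 where "A0 = {f. \<not>(\<exists>\<gamma>\<in>B0. \<forall>i. \<gamma> i \<le> f i)}"
    define A1 where "A1 = {f\<in>A0. \<forall>i. \<beta> i \<le> f i}"
    define A2 where "A2 = {f. \<not>(\<exists>\<gamma>\<in>B1. \<forall>i. \<gamma> i \<le> f i)}"
    have AB: "{f. \<not>(\<exists>\<beta>\<in>B. \<forall>i. \<beta> i \<le> f i)} = A0 - A1"
      using b by (auto simp: A0_def A1_def B0_def)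
    let ?Fib = "\<lambda>A k. {f\<in>A. bnd ?h f \<and> vlin ?h ?c f = k}"
    have key: "gf ds (A0 - A1) k = gf ds A0 k +
       (if \<forall>j. vlin ?h ?c \<beta> j \<le> k j then (- Lpow (ilin ?h ?e \<beta>)) * gf ds A2 (\<lambda>j. k j - vlin ?h ?c \<beta> j) else 0)" for k
    proof -
      have "?Fib (A0 - A1) k = ?Fib A0 k - ?Fib A1 k" by auto
      hence "gf ds (A0 - A1) k = gf ds A0 k - gf ds A1 k"
        unfolding gf_def by (simp only:) (rule sum_diff[OF finite_fib[OF nz]], auto simp: A1_def)
      moreover have "gf ds A1 k = (if \<forall>j. vlin ?h ?c \<beta> j \<le> k j then Lpow (ilin ?h ?e \<beta>) * gf ds A2 (\<lambda>j. k j - vlin ?h ?c \<beta> j) else 0)"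
      proof (cases "\<forall>j. vlin ?h ?c \<beta> j \<le> k j")
        case True
        have bij: "bij_betw (\<lambda>g i. \<beta> i + g i) (?Fib A2 (\<lambda>j. k j - vlin ?h ?c \<beta> j)) (?Fib A1 k)"
        proof (rule bij_betw_byWitness[where f' = "\<lambda>f i. f i - \<beta> i"])
          show "\<forall>a\<in>?Fib A2 (\<lambda>j. k j - vlin ?h ?c \<beta> j). (\<lambda>f i. f i - \<beta> i) (\<lambda>i. \<beta> i + a i) = a" by simp
          show "\<forall>a\<in>?Fib A1 k. (\<lambda>i. \<beta> i + (\<lambda>f i. f i - \<beta> i) a i) = a" by (auto simp: A1_def)
          show "(\<lambda>g i. \<beta> i + g i) ` ?Fib A2 (\<lambda>j. k j - vlin ?h ?c \<beta> j) \<subseteq> ?Fib A1 k"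
          proof (rule image_subsetI)
            fix g assume g: "g \<in> ?Fib A2 (\<lambda>j. k j - vlin ?h ?c \<beta> j)"
            have "\<not>(\<exists>\<gamma>\<in>B0. \<forall>i. \<gamma> i \<le> \<beta> i + g i)"
            proof
              assume "\<exists>\<gamma>\<in>B0. \<forall>i. \<gamma> i \<le> \<beta> i + g i"
              then obtain \<gamma> where "\<gamma> \<in> B0" "\<forall>i. \<gamma> i \<le> \<beta> i + g i" by blast
              hence "(\<lambda>j. \<gamma> j - \<beta> j) \<in> B1" "\<forall>i. \<gamma> i - \<beta> i \<le> g i" by (auto simp: B1_def le_diff_conv add.commute)
              thus False using g by (auto simp: A2_def)
            qed
            moreover have "bnd ?h (\<lambda>i. \<beta> i + g i)" using g bB by (auto simp: bnd_def)
            moreover have "vlin ?h ?c (\<lambda>i. \<beta> i + g i) = k" using g True by (auto simp: vlin_add fun_eq_iff)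
            ultimately show "(\<lambda>i. \<beta> i + g i) \<in> ?Fib A1 k" by (auto simp: A1_def A0_def)
          qed
          show "(\<lambda>f i. f i - \<beta> i) ` ?Fib A1 k \<subseteq> ?Fib A2 (\<lambda>j. k j - vlin ?h ?c \<beta> j)"
          proof (rule image_subsetI)
            fix f assume f: "f \<in> ?Fib A1 k"
            have fe: "f = (\<lambda>i. \<beta> i + (f i - \<beta> i))" using f by (auto simp: A1_def)
            have "\<not>(\<exists>\<gamma>\<in>B1. \<forall>i. \<gamma> i \<le> f i - \<beta> i)"
            proof
              assume "\<exists>\<gamma>\<in>B1. \<forall>i. \<gamma> i \<le> f i - \<beta> i"
              then obtain \<gamma> where "\<gamma> \<in> B0" "\<forall>i. \<gamma> i - \<beta> i \<le> f i - \<beta> i" by (auto simp: B1_def)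
              moreover have "\<forall>i. \<beta> i \<le> f i" using f by (auto simp: A1_def)
              ultimately have "\<gamma> \<in> B0" "\<forall>i. \<gamma> i \<le> f i"
              proof -
                assume a: "\<gamma> \<in> B0" "\<forall>i. \<gamma> i - \<beta> i \<le> f i - \<beta> i" "\<forall>i. \<beta> i \<le> f i"
                show "\<gamma> \<in> B0" by (fact a(1))
                show "\<forall>i. \<gamma> i \<le> f i"
                proof
                  fix i have "\<gamma> i - \<beta> i \<le> f i - \<beta> i" "\<beta> i \<le> f i" using a by auto
                  thus "\<gamma> i \<le> f i" by arith
                qed
              qed
              thus False using f by (auto simp: A1_def A0_def)
            qed
            moreover have "bnd ?h (\<lambda>i. f i - \<beta> i)" using f by (auto simp: bnd_def)
            moreover have "vlin ?h ?c (\<lambda>i. f i - \<beta> i) = (\<lambda>j. k j - vlin ?h ?c \<beta> j)"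
            proof -
              have "vlin ?h ?c f = (\<lambda>j. vlin ?h ?c \<beta> j + vlin ?h ?c (\<lambda>i. f i - \<beta> i) j)"
                by (subst fe) (simp add: vlin_add)
              thus ?thesis using f by (auto simp: fun_eq_iff) (metis add_diff_cancel_left')
            qed
            ultimately show "(\<lambda>i. f i - \<beta> i) \<in> ?Fib A2 (\<lambda>j. k j - vlin ?h ?c \<beta> j)" by (auto simp: A2_def)
          qed
        qed
        have "gf ds A1 k = (\<Sum>g\<in>?Fib A2 (\<lambda>j. k j - vlin ?h ?c \<beta> j). Lpow (ilin ?h ?e (\<lambda>i. \<beta> i + g i)))"
          unfolding gf_def by (rule sum.reindex_bij_betw[OF bij, symmetric])
        also have "\<dots> = Lpow (ilin ?h ?e \<beta>) * gf ds A2 (\<lambda>j. k j - vlin ?h ?c \<beta> j)"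
          by (simp add: gf_def ilin_add Lpow_add sum_distrib_left)
        finally show ?thesis using True by simp
      next
        case False
        have E: "?Fib A1 k = {}"
        proof (rule ccontr)
          assume "?Fib A1 k \<noteq> {}"
          then obtain f where "f \<in> ?Fib A1 k" by blast
          hence "\<forall>j. vlin ?h ?c \<beta> j \<le> k j" using vlin_mono[of \<beta> f] by (auto simp: A1_def)
          thus False using False by blast
        qed
        show ?thesis unfolding gf_def by (subst E) (simp add: False)
      qed
      ultimately show ?thesis by simp
    qed
    have "inC ds (\<lambda>k. gf ds A0 k +
       (if \<forall>j. vlin ?h ?c \<beta> j \<le> k j then (- Lpow (ilin ?h ?e \<beta>)) * gf ds A2 (\<lambda>j. k j - vlin ?h ?c \<beta> j) else 0))"
      by (rule inC_add[OF nz]) (use IH0 IH1 inC_shift[OF nz] in \<open>auto simp: A0_def A2_def\<close>)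
    moreover have "gf ds (A0 - A1) = (\<lambda>k. gf ds A0 k +
       (if \<forall>j. vlin ?h ?c \<beta> j \<le> k j then (- Lpow (ilin ?h ?e \<beta>)) * gf ds A2 (\<lambda>j. k j - vlin ?h ?c \<beta> j) else 0))"
      using key by (rule ext)
    ultimately show ?thesis by (simp only: AB)
  qed
qed




definition del :: "nat \<Rightarrow> (nat \<Rightarrow> nat) \<Rightarrow> nat \<Rightarrow> nat" where
  "del j f = (\<lambda>i. if i < j then f i else f (Suc i))"

lemma del_le: "f j = g j \<Longrightarrow> (\<forall>i. del j f i \<le> del j g i) \<Longrightarrow> f i \<le> g i"
proof -
  assume e: "f j = g j" and l: "\<forall>i. del j f i \<le> del j g i"
  consider "i < j" | "i = j" | i' where "i = Suc i'" "j \<le> i'"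
  proof -
    assume a1: "i < j \<Longrightarrow> thesis" and a2: "i = j \<Longrightarrow> thesis" and a3: "\<And>i'. i = Suc i' \<Longrightarrow> j \<le> i' \<Longrightarrow> thesis"
    show thesis
    proof (cases "i \<le> j")
      case True thus ?thesis using a1 a2 by linarith
    next
      case False
      hence "i = Suc (i - 1)" "j \<le> i - 1" by auto
      thus ?thesis using a3 by blast
    qed
  qed
  thus "f i \<le> g i"
  proof cases
    case 1 thus ?thesis using l[rule_format, of i] by (simp add: del_def)
  next
    case 2 thus ?thesis using e by simp
  next
    case 3 thus ?thesis using l[rule_format, of i'] by (simp add: del_def)
  qed
qed

lemma antichain_finite:
  "(\<forall>f\<in>X. bnd d f) \<Longrightarrow> (\<forall>f\<in>X. \<forall>g\<in>X. (\<forall>i. f i \<le> g i) \<longrightarrow> f = g) \<Longrightarrow> finite X"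
proof (induction d arbitrary: X)
  case 0
  hence "X \<subseteq> {\<lambda>_. 0}" by (auto simp: bnd_def)
  thus ?case using finite_subset by blast
next
  case (Suc d)
  show ?case
  proof (cases "X = {}")
    case True thus ?thesis by simp
  next
    case False
    then obtain x0 where x0: "x0 \<in> X" by blast
    have slice: "finite {x\<in>X. x j = c}" if j: "j < Suc d" for j c
    proof -
      let ?Y = "{x\<in>X. x j = c}"
      have inj: "inj_on (del j) ?Y"
      proof (rule inj_onI)
        fix f g assume f: "f \<in> ?Y" and g: "g \<in> ?Y" and e: "del j f = del j g"
        have fj: "f j = g j" using f g by simp
        have "f i \<le> g i \<and> g i \<le> f i" for i
          using del_le[of f j g i, OF fj] del_le[of g j f i, OF fj[symmetric]] e by simp
        thus "f = g" by (auto intro: antisym)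
      qed
      have "finite (del j ` ?Y)"
      proof (rule Suc.IH)
        show "\<forall>f\<in>del j ` ?Y. bnd d f"
        proof
          fix f assume "f \<in> del j ` ?Y"
          then obtain x where x: "x \<in> X" "f = del j x" by auto
          have "bnd (Suc d) x" using x Suc.prems by auto
          thus "bnd d f" unfolding x(2) bnd_def del_def
          proof (intro allI impI)
            fix i assume bx: "\<forall>i\<ge>Suc d. x i = 0" and i: "d \<le> i"
            have "\<not> i < j" using i j by simp
            thus "(if i < j then x i else x (Suc i)) = 0" using bx i by simp
          qed
        qed
        show "\<forall>f\<in>del j ` ?Y. \<forall>g\<in>del j ` ?Y. (\<forall>i. f i \<le> g i) \<longrightarrow> f = g"
        proof (intro ballI impI)
          fix f g assume "f \<in> del j ` ?Y" "g \<in> del j ` ?Y" and l0: "\<forall>i. f i \<le> g i"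
          then obtain x y where x: "x \<in> X" "x j = c" and y: "y \<in> X" "y j = c" and fg: "f = del j x" "g = del j y" by auto
          have l: "\<forall>i. del j x i \<le> del j y i" using l0 fg by simp
          have "\<forall>i. x i \<le> y i" using del_le[of x j y] x y l by auto
          hence "x = y" using Suc.prems(2) x(1) y(1) by blast
          thus "f = g" using fg by simp
        qed
      qed
      thus ?thesis using finite_imageD inj by blast
    qed
    have "X \<subseteq> {x0} \<union> (\<Union>j<Suc d. \<Union>c<x0 j. {x\<in>X. x j = c})"
    proof
      fix x assume x: "x \<in> X"
      show "x \<in> {x0} \<union> (\<Union>j<Suc d. \<Union>c<x0 j. {x\<in>X. x j = c})"
      proof (cases "x = x0")
        case False
        hence "\<not> (\<forall>i. x0 i \<le> x i)" using Suc.prems(2) x x0 by metis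
        then obtain j where j: "x j < x0 j" by (auto simp: not_le)
        have "j < Suc d"
        proof (rule ccontr)
          assume "\<not> j < Suc d"
          hence "x0 j = 0" using Suc.prems(1) x0 unfolding bnd_def by simp
          thus False using j by simp
        qed
        thus ?thesis using j x by blast
      qed simp
    qed
    moreover have "finite ({x0} \<union> (\<Union>j<Suc d. \<Union>c<x0 j. {x\<in>X. x j = c}))"
      using slice by (intro finite_UnI finite_UN_I) auto
    ultimately show ?thesis using finite_subset by blast
  qed
qed

definition Minset :: "(nat \<Rightarrow> nat) set \<Rightarrow> (nat \<Rightarrow> nat) set" where
  "Minset A = {m\<in>A. \<forall>a\<in>A. (\<forall>i. a i \<le> m i) \<longrightarrow> a = m}"

lemma finite_Minset: "(\<forall>f\<in>A. bnd d f) \<Longrightarrow> finite (Minset A)"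
  by (rule antichain_finite[of _ d]) (auto simp: Minset_def)

lemma min_below:
  assumes b: "\<forall>f\<in>A. bnd d f" and x: "x \<in> A"
  shows "\<exists>m\<in>Minset A. \<forall>i. m i \<le> x i"
proof -
  obtain m where m: "m \<in> A \<and> (\<forall>i. m i \<le> x i)"
    and least: "\<forall>y. y \<in> A \<and> (\<forall>i. y i \<le> x i) \<longrightarrow> (\<Sum>i<d. m i) \<le> (\<Sum>i<d. y i)"
    using ex_has_least_nat[of "\<lambda>f. f \<in> A \<and> (\<forall>i. f i \<le> x i)" x "\<lambda>f. \<Sum>i<d. f i"] x by auto
  have "m \<in> Minset A"
  proof (unfold Minset_def, safe)
    show "m \<in> A" using m by simp
    fix a assume a: "a \<in> A" "\<forall>i. a i \<le> m i"
    have s: "(\<Sum>i<d. m i) \<le> (\<Sum>i<d. a i)" using least a m le_trans by blast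
    have "a i = m i" for i
    proof (cases "i < d")
      case True
      show ?thesis
      proof (rule ccontr)
        assume "a i \<noteq> m i"
        hence "a i < m i" using a by (simp add: order_le_neq_trans)
        hence "(\<Sum>i<d. a i) < (\<Sum>i<d. m i)"
          using True a by (intro sum_strict_mono_ex1) auto
        thus False using s by simp
      qed
    next
      case False
      have "bnd d a" "bnd d m" using b a(1) m by auto
      thus ?thesis using False unfolding bnd_def by simp
    qed
    thus "a = m" by auto
  qed
  thus ?thesis using m by blast
qed




lemma vlin_cong: "(\<And>i. i < h \<Longrightarrow> c i = c' i) \<Longrightarrow> vlin h c f = vlin h c' f"
  unfolding vlin_def by auto

lemma ilin_cong: "(\<And>i. i < h \<Longrightarrow> c i = c' i) \<Longrightarrow> ilin h c f = ilin h c' f"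
  unfolding ilin_def by auto

lemma vlin_comp: "vlin d N (vlin h G f) = vlin h (\<lambda>j. vlin d N (G j)) f"
  unfolding vlin_def
  by (auto simp: fun_eq_iff sum_distrib_left sum_distrib_right mult.assoc intro: sum.swap)

lemma ilin_comp: "ilin d E (vlin h G f) = ilin h (\<lambda>j. ilin d E (G j)) f"
  unfolding vlin_def ilin_def
  by (auto simp: sum_distrib_left sum_distrib_right mult.assoc intro: sum.swap)

lemma vlin_zero: "vlin h c (\<lambda>_. 0) = (\<lambda>_. 0)" by (simp add: vlin_def)
lemma ilin_zero: "ilin h c (\<lambda>_. 0) = 0" by (simp add: ilin_def)

definition lexless :: "(nat \<Rightarrow> nat) \<Rightarrow> (nat \<Rightarrow> nat) \<Rightarrow> bool" where
  "lexless f g \<longleftrightarrow> (\<exists>i. f i < g i \<and> (\<forall>j<i. f j = g j))"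

lemma lexless_irrefl: "\<not> lexless f f" by (auto simp: lexless_def)

lemma lexless_trans: "lexless f g \<Longrightarrow> lexless g h \<Longrightarrow> lexless f h"
proof -
  assume "lexless f g" "lexless g h"
  then obtain i i' where i: "f i < g i" "\<forall>j<i. f j = g j" and i': "g i' < h i'" "\<forall>j<i'. g j = h j"
    by (auto simp: lexless_def)
  show "lexless f h"
  proof (cases "i \<le> i'")
    case True
    show ?thesis unfolding lexless_def
    proof (intro exI[of _ i] conjI allI impI)
      show "f i < h i" using i i' True by (cases "i = i'") auto
      fix j assume "j < i" thus "f j = h j" using i i' True by auto
    qed
  next
    case False
    show ?thesis unfolding lexless_def
    proof (intro exI[of _ i'] conjI allI impI)
      show "f i' < h i'" using i i' False by auto
      fix j assume "j < i'" thus "f j = h j" using i i' False by auto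
    qed
  qed
qed

lemma lexless_total: "f \<noteq> g \<Longrightarrow> lexless f g \<or> lexless g f"
proof -
  assume "f \<noteq> g"
  then obtain i0 where "f i0 \<noteq> g i0" by auto
  define i where "i = (LEAST i. f i \<noteq> g i)"
  have ne: "f i \<noteq> g i" unfolding i_def by (rule LeastI[of _ i0]) fact
  have eq: "\<forall>j<i. f j = g j" unfolding i_def using not_less_Least by blast
  show ?thesis
  proof (cases "f i < g i")
    case True thus ?thesis using eq by (auto simp: lexless_def)
  next
    case False hence "g i < f i" using ne by simp
    thus ?thesis using eq by (auto simp: lexless_def)
  qed
qed

lemma lexless_shift: "lexless f g \<Longrightarrow> lexless (\<lambda>i. f i + t i) (\<lambda>i. g i + t i)"
  by (auto simp: lexless_def)

lemma lexless_min: "finite A \<Longrightarrow> A \<noteq> {} \<Longrightarrow> \<exists>m\<in>A. \<forall>a\<in>A. \<not> lexless a m"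
proof (induction A rule: finite_ne_induct)
  case (singleton x) thus ?case using lexless_irrefl by auto
next
  case (insert x F)
  then obtain m where m: "m \<in> F" "\<forall>a\<in>F. \<not> lexless a m" by blast
  show ?case
  proof (cases "lexless x m")
    case True
    have "\<forall>a\<in>insert x F. \<not> lexless a x"
      using m True lexless_trans lexless_irrefl by blast
    thus ?thesis by blast
  next
    case False thus ?thesis using m by blast
  qed
qed

lemma bnd_Suc': "bnd (Suc h) key \<longleftrightarrow> bnd h (\<lambda>i. key (Suc i))"
  unfolding bnd_def by (auto, metis Suc_le_D Suc_le_mono)




lemma smul_in_K:
  fixes K :: "(nat \<Rightarrow> nat) set"
  assumes K0: "(\<lambda>_. 0) \<in> K" and Kadd: "\<And>a b. a\<in>K \<Longrightarrow> b\<in>K \<Longrightarrow> (\<lambda>i. a i + b i) \<in> K"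
    and g: "g \<in> K"
  shows "(\<lambda>i. n * g i) \<in> K"
proof (induction n)
  case 0 thus ?case using K0 by simp
next
  case (Suc n)
  have "(\<lambda>i. Suc n * g i) = (\<lambda>i. g i + n * g i)" by simp
  thus ?case using Kadd[OF g Suc] by metis
qed

lemma vlin_in_K:
  fixes K :: "(nat \<Rightarrow> nat) set"
  assumes K0: "(\<lambda>_. 0) \<in> K" and Kadd: "\<And>a b. a\<in>K \<Longrightarrow> b\<in>K \<Longrightarrow> (\<lambda>i. a i + b i) \<in> K"
    and G: "\<forall>j<h. G j \<in> K"
  shows "vlin h G f \<in> K"
  using G
proof (induction h)
  case 0 thus ?case using K0 by (simp add: vlin_def)
next
  case (Suc h)
  have "vlin (Suc h) G f = (\<lambda>i. vlin h G f i + f h * G h i)" by (simp add: vlin_def)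
  moreover have "vlin h G f \<in> K" using Suc.IH Suc.prems by simp
  moreover have "(\<lambda>i. f h * G h i) \<in> K" by (rule smul_in_K[OF K0 Kadd]) (use Suc.prems in auto)
  ultimately show ?case using Kadd[of "vlin h G f" "\<lambda>i. f h * G h i"] by simp
qed

lemma vlin_delta: "j < h \<Longrightarrow> vlin h G (\<lambda>i. if i = j then 1 else 0) = G j"
proof (rule ext)
  fix x assume j: "j < h"
  have "vlin h G (\<lambda>i. if i = j then 1 else 0) x = (\<Sum>i<h. if i = j then G i x else 0)"
    unfolding vlin_def by (rule sum.cong) auto
  also have "\<dots> = G j x" using j by simp
  finally show "vlin h G (\<lambda>i. if i = j then 1 else 0) x = G j x" .
qed

lemma sum_pos_bnd:
  assumes "bnd d g" "g \<noteq> (\<lambda>_. 0)" shows "0 < (\<Sum>i<d. g i)"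
proof -
  obtain i where i: "g i \<noteq> 0" using assms(2) by (meson ext)
  have "i < d"
  proof (rule ccontr)
    assume "\<not> i < d" hence "d \<le> i" by simp
    thus False using i assms(1) unfolding bnd_def by simp
  qed
  hence "g i \<le> (\<Sum>i<d. g i)" by (intro member_le_sum) auto
  thus ?thesis using i by simp
qed

theorem lattice:
  fixes nsd :: "nat \<Rightarrow> 'r::finite \<Rightarrow> nat" and esd :: "nat \<Rightarrow> int"
  assumes bK: "\<forall>z\<in>K. bnd d z" and bS: "\<forall>z\<in>S. bnd d z"
    and K0: "(\<lambda>_. 0) \<in> K" and Kadd: "\<And>a b. a\<in>K \<Longrightarrow> b\<in>K \<Longrightarrow> (\<lambda>i. a i + b i) \<in> K"
    and Ksub: "\<And>a b. a\<in>K \<Longrightarrow> b\<in>K \<Longrightarrow> \<forall>i. a i \<le> b i \<Longrightarrow> (\<lambda>i. b i - a i) \<in> K"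
    and SK: "\<And>z a. z\<in>S \<Longrightarrow> a\<in>K \<Longrightarrow> (\<lambda>i. z i + a i) \<in> S"
    and SS: "\<And>z z'. z\<in>S \<Longrightarrow> z'\<in>S \<Longrightarrow> \<forall>i. z i \<le> z' i \<Longrightarrow> (\<lambda>i. z' i - z i) \<in> K"
    and Knz: "\<And>a. a\<in>K \<Longrightarrow> a \<noteq> (\<lambda>_. 0) \<Longrightarrow> vlin d nsd a \<noteq> (\<lambda>_. 0)"
    and gs: "set gs = Minset (K - {\<lambda>_. 0})"
  shows "inC (map (\<lambda>g. (ilin d esd g, vlin d nsd g)) gs) (\<lambda>k. \<Sum>z\<in>{z\<in>S. vlin d nsd z = k}. Lpow (ilin d esd z))"
proof -
  define h where "h = length gs"
  define ds where "ds = map (\<lambda>g. (ilin d esd g, vlin d nsd g)) gs"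
  define comb where "comb = vlin h (\<lambda>j. gs!j)"
  have lds: "length ds = h" by (simp add: ds_def h_def)
  have gsK: "gs!j \<in> K" "gs!j \<noteq> (\<lambda>_. 0)" if "j < h" for j
    using nth_mem[of j gs] that gs by (auto simp: h_def Minset_def)
  have nz: "nzds ds"
    unfolding nzds_def ds_def using gs Knz by (auto simp: Minset_def)
  have dc_eq: "dc ds j = vlin d nsd (gs!j)" and de_eq: "de ds j = ilin d esd (gs!j)" if "j < h" for j
    using that by (simp_all add: dc_def de_def ds_def h_def)
  have comb_K: "comb f \<in> K" for f
    unfolding comb_def by (rule vlin_in_K[OF K0 Kadd]) (use gsK in auto)
  have vlin_comb: "vlin d nsd (comb f) = vlin (length ds) (dc ds) f" for f
    unfolding comb_def vlin_comp lds by (rule vlin_cong) (simp add: dc_eq)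
  have ilin_comb: "ilin d esd (comb f) = ilin (length ds) (de ds) f" for f
    unfolding comb_def ilin_comp lds by (rule ilin_cong) (simp add: de_eq)
  have bKnz: "\<forall>z\<in>K - {\<lambda>_. 0}. bnd d z" using bK by auto
  have decK: "\<kappa> \<in> K \<Longrightarrow> \<exists>f. bnd h f \<and> \<kappa> = comb f" for \<kappa>
  proof (induction "\<Sum>i<d. \<kappa> i" arbitrary: \<kappa> rule: less_induct)
    case less
    show ?case
    proof (cases "\<kappa> = (\<lambda>_. 0)")
      case True
      thus ?thesis by (intro exI[of _ "\<lambda>_. 0"]) (simp add: bnd_def comb_def vlin_zero)
    next
      case False
      hence "\<kappa> \<in> K - {\<lambda>_. 0}" using less.prems by simp
      then obtain g where g: "g \<in> Minset (K - {\<lambda>_. 0})" "\<forall>i. g i \<le> \<kappa> i"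
        using min_below[OF bKnz] by blast
      then obtain j0 where j0: "j0 < h" "g = gs!j0" using gs by (metis h_def in_set_conv_nth)
      have gK: "g \<in> K" "g \<noteq> (\<lambda>_. 0)" using g(1) by (auto simp: Minset_def)
      define \<kappa>' where "\<kappa>' = (\<lambda>i. \<kappa> i - g i)"
      have k'K: "\<kappa>' \<in> K" unfolding \<kappa>'_def using Ksub[OF gK(1) less.prems g(2)] .
      have "(\<Sum>i<d. \<kappa>' i) = (\<Sum>i<d. \<kappa> i) - (\<Sum>i<d. g i)"
        unfolding \<kappa>'_def using g(2) by (intro sum_subtractf_nat) auto
      moreover have "0 < (\<Sum>i<d. g i)" using sum_pos_bnd[OF _ gK(2)] bK gK(1) by blast
      moreover have "(\<Sum>i<d. g i) \<le> (\<Sum>i<d. \<kappa> i)" using g(2) by (intro sum_mono) auto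
      ultimately have lt: "(\<Sum>i<d. \<kappa>' i) < (\<Sum>i<d. \<kappa> i)" by linarith
      obtain f where f: "bnd h f" "\<kappa>' = comb f" using less.hyps[OF lt k'K] by blast
      define f' where "f' = (\<lambda>i. f i + (if i = j0 then 1 else 0))"
      have "bnd h f'" using f(1) j0(1) by (auto simp: bnd_def f'_def)
      moreover have "comb f' = (\<lambda>i. \<kappa>' i + g i)"
        unfolding f'_def comb_def vlin_add vlin_delta[OF j0(1)] using f(2) j0(2) by (simp add: comb_def)
      moreover have "(\<lambda>i. \<kappa>' i + g i) = \<kappa>" using g(2) by (auto simp: \<kappa>'_def)
      ultimately show ?thesis by auto
    qed
  qed
  obtain ms where ms: "set ms = Minset S" using finite_list[OF finite_Minset[OF bS]] by blast
  define q where "q = length ms"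
  have msS: "ms!\<sigma> \<in> S" if "\<sigma> < q" for \<sigma> using nth_mem[of \<sigma> ms] that ms by (auto simp: q_def Minset_def)
  define img where "img = (\<lambda>\<sigma> f i. (ms!\<sigma>) i + comb f i)"
  define Keys where "Keys = (\<lambda>z. {key. key 0 < q \<and> bnd (Suc h) key \<and> img (key 0) (\<lambda>i. key (Suc i)) = z})"
  define W where "W = (\<lambda>\<sigma>. {f. \<not>(\<exists>k'\<in>Keys (img \<sigma> f). lexless k' (case_nat \<sigma> f))})"
  define U where "U = (\<lambda>\<sigma>. {f. bnd h f \<and> (\<exists>k'\<in>Keys (img \<sigma> f). lexless k' (case_nat \<sigma> f))})"
  have imgS: "img \<sigma> f \<in> S" if "\<sigma> < q" for \<sigma> f
    unfolding img_def using SK[OF msS[OF that] comb_K] .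
  have key_in: "case_nat \<sigma> f \<in> Keys (img \<sigma> f)" if "\<sigma> < q" "bnd h f" for \<sigma> f
    using that by (simp add: Keys_def bnd_Suc)
  have finKeys: "finite (Keys z)" for z
  proof -
    have "Keys z \<subseteq> {key. bnd (Suc h) key \<and> (\<forall>i. key i \<le> q + (\<Sum>i<d. z i))}"
    proof (rule subsetI)
      fix key assume "key \<in> Keys z"
      hence k0: "key 0 < q" and kb: "bnd (Suc h) key" and kz: "img (key 0) (\<lambda>i. key (Suc i)) = z"
        by (auto simp: Keys_def)
      have "key i \<le> q + (\<Sum>i<d. z i)" for i
      proof (cases i)
        case 0 thus ?thesis using k0 by simp
      next
        case (Suc j)
        show ?thesis
        proof (cases "j < h")
          case False thus ?thesis using kb Suc by (simp add: bnd_def)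
        next
          case True
          obtain i0 where i0: "(gs!j) i0 \<noteq> 0" using gsK(2)[OF True] by (meson ext)
          have "i0 < d"
          proof (rule ccontr)
            assume "\<not> i0 < d" hence "d \<le> i0" by simp
            thus False using i0 bK gsK(1)[OF True] unfolding bnd_def by simp
          qed
          have "key i \<le> key i * (gs!j) i0" using i0 by simp
          also have "\<dots> \<le> comb (\<lambda>i. key (Suc i)) i0" unfolding comb_def vlin_def Suc
            using True by (intro member_le_sum) auto
          also have "\<dots> \<le> z i0" using kz by (auto simp: img_def)
          also have "\<dots> \<le> (\<Sum>i<d. z i)" using \<open>i0 < d\<close> by (intro member_le_sum) auto
          finally show ?thesis by simp
        qed
      qed
      thus "key \<in> {key. bnd (Suc h) key \<and> (\<forall>i. key i \<le> q + (\<Sum>i<d. z i))}" using kb by simp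
    qed
    thus ?thesis using finite_bnd_bounded finite_subset by fast
  qed
  have Keys_ne: "Keys z \<noteq> {}" if z: "z \<in> S" for z
  proof -
    obtain m where m: "m \<in> Minset S" "\<forall>i. m i \<le> z i" using min_below[OF bS z] by blast
    then obtain \<sigma> where \<sigma>: "\<sigma> < q" "m = ms!\<sigma>" using ms by (metis q_def in_set_conv_nth)
    have "m \<in> S" using m by (simp add: Minset_def)
    hence "(\<lambda>i. z i - m i) \<in> K" using SS z m(2) by blast
    then obtain f where f: "bnd h f" "(\<lambda>i. z i - m i) = comb f" using decK by blast
    have "img \<sigma> f = z" using f(2) m(2) \<sigma>(2) unfolding img_def by (auto simp: fun_eq_iff) (metis add_diff_inverse_nat not_less)
    thus ?thesis using key_in[OF \<sigma>(1) f(1)] by auto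
  qed
  have comb_add: "comb (\<lambda>i. f i + t i) = (\<lambda>i. comb f i + comb t i)" for f t
    by (simp add: comb_def vlin_add)
  have U_up: "g \<in> U \<sigma>" if f: "f \<in> U \<sigma>" and g: "bnd h g" and le: "\<forall>i. f i \<le> g i" for f g \<sigma>
  proof -
    obtain k' where k': "k' \<in> Keys (img \<sigma> f)" "lexless k' (case_nat \<sigma> f)" using f by (auto simp: U_def)
    define t where "t = (\<lambda>i. g i - f i)"
    have gft: "g = (\<lambda>i. f i + t i)" using le by (auto simp: t_def)
    have bt: "bnd h t" using g by (auto simp: bnd_def t_def)
    define k'' where "k'' = (\<lambda>i. k' i + case_nat 0 t i)"
    have "k'' \<in> Keys (img \<sigma> g)"
    proof -
      have "k'' 0 < q" "bnd (Suc h) k''" using k'(1) bt by (auto simp: Keys_def k''_def bnd_Suc' bnd_def split: nat.splits)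
      moreover have "img (k'' 0) (\<lambda>i. k'' (Suc i)) = img \<sigma> g"
      proof -
        have "(\<lambda>i. k'' (Suc i)) = (\<lambda>i. k' (Suc i) + t i)" by (simp add: k''_def)
        hence "img (k'' 0) (\<lambda>i. k'' (Suc i)) = (\<lambda>i. img (k' 0) (\<lambda>i. k' (Suc i)) i + comb t i)"
          by (simp add: img_def comb_add k''_def fun_eq_iff)
        also have "\<dots> = (\<lambda>i. img \<sigma> f i + comb t i)" using k'(1) by (simp add: Keys_def)
        also have "\<dots> = img \<sigma> g" by (simp add: img_def gft comb_add fun_eq_iff)
        finally show ?thesis .
      qed
      ultimately show ?thesis by (simp add: Keys_def)
    qed
    moreover have "lexless k'' (case_nat \<sigma> g)"
    proof -
      have "case_nat \<sigma> g = (\<lambda>i. case_nat \<sigma> f i + case_nat 0 t i)"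
        by (auto simp: fun_eq_iff gft split: nat.splits)
      thus ?thesis unfolding k''_def using lexless_shift[OF k'(2)] by simp
    qed
    ultimately show ?thesis using g by (auto simp: U_def)
  qed
  have bU: "\<forall>f\<in>U \<sigma>. bnd h f" for \<sigma> by (auto simp: U_def)
  have gf_cong: "gf ds A = gf ds A'" if "\<And>f. bnd h f \<Longrightarrow> f \<in> A \<longleftrightarrow> f \<in> A'" for A A'
    unfolding gf_def lds using that by (intro ext sum.cong) auto
  have inC_W: "inC ds (gf ds (W \<sigma>))" for \<sigma>
  proof -
    have "gf ds (W \<sigma>) = gf ds {f. \<not>(\<exists>\<beta>\<in>Minset (U \<sigma>). \<forall>i. \<beta> i \<le> f i)}"
    proof (rule gf_cong)
      fix f assume bf: "bnd h f"
      have "f \<in> W \<sigma> \<longleftrightarrow> f \<notin> U \<sigma>" using bf by (auto simp: W_def U_def)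
      also have "\<dots> \<longleftrightarrow> \<not>(\<exists>\<beta>\<in>Minset (U \<sigma>). \<forall>i. \<beta> i \<le> f i)"
      proof
        assume "f \<notin> U \<sigma>"
        thus "\<not>(\<exists>\<beta>\<in>Minset (U \<sigma>). \<forall>i. \<beta> i \<le> f i)" using U_up bf by (auto simp: Minset_def)
      next
        assume "\<not>(\<exists>\<beta>\<in>Minset (U \<sigma>). \<forall>i. \<beta> i \<le> f i)"
        thus "f \<notin> U \<sigma>" using min_below[OF bU] by blast
      qed
      finally show "f \<in> W \<sigma> \<longleftrightarrow> f \<in> {f. \<not>(\<exists>\<beta>\<in>Minset (U \<sigma>). \<forall>i. \<beta> i \<le> f i)}" by simp
    qed
    moreover have "inC ds (gf ds {f. \<not>(\<exists>\<beta>\<in>Minset (U \<sigma>). \<forall>i. \<beta> i \<le> f i)})"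
      by (rule gf_avoid[OF nz finite_Minset[OF bU]]) (use bU in \<open>auto simp: lds Minset_def\<close>)
    ultimately show ?thesis by simp
  qed
  have ident: "(\<Sum>z\<in>{z\<in>S. vlin d nsd z = k}. Lpow (ilin d esd z)) =
     (\<Sum>\<sigma><q. if (\<forall>j. vlin d nsd (ms!\<sigma>) j \<le> k j)
        then Lpow (ilin d esd (ms!\<sigma>)) * gf ds (W \<sigma>) (\<lambda>j. k j - vlin d nsd (ms!\<sigma>) j) else 0)" for k
  proof -
    let ?Z = "{z\<in>S. vlin d nsd z = k}"
    define D where "D = (SIGMA \<sigma>:{..<q}. {f\<in>W \<sigma>. bnd h f \<and> vlin d nsd (img \<sigma> f) = k})"
    have img_lin: "vlin d nsd (img \<sigma> f) = (\<lambda>j. vlin d nsd (ms!\<sigma>) j + vlin (length ds) (dc ds) f j)" for \<sigma> f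
      unfolding img_def vlin_add vlin_comb ..
    have img_ilin: "ilin d esd (img \<sigma> f) = ilin d esd (ms!\<sigma>) + ilin (length ds) (de ds) f" for \<sigma> f
      unfolding img_def ilin_add ilin_comb ..
    have bij: "bij_betw (\<lambda>(\<sigma>,f). img \<sigma> f) D ?Z"
      unfolding bij_betw_def
    proof
      show "inj_on (\<lambda>(\<sigma>,f). img \<sigma> f) D"
      proof (rule inj_onI)
        fix x y assume ax: "x \<in> D" and ay: "y \<in> D" and e: "(\<lambda>(\<sigma>,f). img \<sigma> f) x = (\<lambda>(\<sigma>,f). img \<sigma> f) y"
        obtain \<sigma> f where x: "x = (\<sigma>, f)" by fastforce
        obtain \<sigma>' f' where y: "y = (\<sigma>', f')" by fastforce
        have a3: "img \<sigma> f = img \<sigma>' f'" using e x y by simp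
        from ax ay have s: "\<sigma><q" "\<sigma>'<q" "bnd h f" "bnd h f'" "f \<in> W \<sigma>" "f' \<in> W \<sigma>'" by (auto simp: D_def x y)
        have K1: "case_nat \<sigma> f \<in> Keys (img \<sigma> f)" by (rule key_in) (use s in auto)
        have K2: "case_nat \<sigma>' f' \<in> Keys (img \<sigma> f)" using key_in[OF s(2) s(4)] a3 by simp
        have "\<not> lexless (case_nat \<sigma>' f') (case_nat \<sigma> f)" using s(5) K2 by (auto simp: W_def)
        moreover have "\<not> lexless (case_nat \<sigma> f) (case_nat \<sigma>' f')" using s(6) K1 a3 by (auto simp: W_def)
        ultimately have ce: "case_nat \<sigma> f = case_nat \<sigma>' f'" using lexless_total by blast
        have "\<sigma> = \<sigma>'" using fun_cong[OF ce, of 0] by simp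
        moreover have "f = f'" using fun_cong[OF ce] by (auto simp: fun_eq_iff) (metis nat.case(2))
        ultimately show "x = y" using x y by simp
      qed
      show "(\<lambda>(\<sigma>,f). img \<sigma> f) ` D = ?Z"
      proof (intro equalityI subsetI)
        fix z assume "z \<in> (\<lambda>(\<sigma>,f). img \<sigma> f) ` D"
        then obtain \<sigma> f where "(\<sigma>, f) \<in> D" "z = img \<sigma> f" by auto
        thus "z \<in> ?Z" using imgS by (auto simp: D_def)
      next
        fix z assume z: "z \<in> ?Z"
        obtain key where key: "key \<in> Keys z" "\<forall>a\<in>Keys z. \<not> lexless a key"
          using lexless_min[OF finKeys Keys_ne] z by blast
        define \<sigma> where "\<sigma> = key 0"
        define f where "f = (\<lambda>i. key (Suc i))"
        have keq: "case_nat \<sigma> f = key" by (auto simp: fun_eq_iff \<sigma>_def f_def split: nat.splits)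
        have iz: "img \<sigma> f = z" and sq: "\<sigma> < q" and bf: "bnd h f"
          using key(1) by (auto simp: Keys_def \<sigma>_def f_def bnd_Suc')
        have "f \<in> W \<sigma>" using key(2) iz keq by (auto simp: W_def)
        hence "(\<sigma>, f) \<in> D" using sq bf iz z by (auto simp: D_def)
        thus "z \<in> (\<lambda>(\<sigma>,f). img \<sigma> f) ` D" using iz by force
      qed
    qed
    have finI: "finite {f\<in>W \<sigma>. bnd h f \<and> vlin d nsd (img \<sigma> f) = k}" for \<sigma>
    proof (rule finite_subset[OF _ finite_Lam[OF nzds_dc[OF nz], of k]])
      show "{f\<in>W \<sigma>. bnd h f \<and> vlin d nsd (img \<sigma> f) = k} \<subseteq> Lam (length ds) (dc ds) k"
        by (auto simp: Lam_def img_lin lds)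
    qed
    have "(\<Sum>z\<in>?Z. Lpow (ilin d esd z)) = (\<Sum>x\<in>D. Lpow (ilin d esd ((\<lambda>(\<sigma>,f). img \<sigma> f) x)))"
      by (rule sum.reindex_bij_betw[OF bij, symmetric])
    also have "\<dots> = (\<Sum>\<sigma><q. \<Sum>f\<in>{f\<in>W \<sigma>. bnd h f \<and> vlin d nsd (img \<sigma> f) = k}. Lpow (ilin d esd (img \<sigma> f)))"
      unfolding D_def by (subst sum.Sigma) (use finI in \<open>auto simp: case_prod_unfold\<close>)
    also have "\<dots> = (\<Sum>\<sigma><q. if (\<forall>j. vlin d nsd (ms!\<sigma>) j \<le> k j)
        then Lpow (ilin d esd (ms!\<sigma>)) * gf ds (W \<sigma>) (\<lambda>j. k j - vlin d nsd (ms!\<sigma>) j) else 0)"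
    proof (rule sum.cong[OF refl])
      fix \<sigma>
      show "(\<Sum>f\<in>{f\<in>W \<sigma>. bnd h f \<and> vlin d nsd (img \<sigma> f) = k}. Lpow (ilin d esd (img \<sigma> f))) =
        (if (\<forall>j. vlin d nsd (ms!\<sigma>) j \<le> k j)
        then Lpow (ilin d esd (ms!\<sigma>)) * gf ds (W \<sigma>) (\<lambda>j. k j - vlin d nsd (ms!\<sigma>) j) else 0)"
      proof (cases "\<forall>j. vlin d nsd (ms!\<sigma>) j \<le> k j")
        case True
        have E: "{f\<in>W \<sigma>. bnd h f \<and> vlin d nsd (img \<sigma> f) = k} =
              {f\<in>W \<sigma>. bnd (length ds) f \<and> vlin (length ds) (dc ds) f = (\<lambda>j. k j - vlin d nsd (ms!\<sigma>) j)}"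
          using True by (auto simp: img_lin lds fun_eq_iff) (metis add_diff_cancel_left')
        show ?thesis unfolding E gf_def using True by (simp add: img_ilin Lpow_add sum_distrib_left)
      next
        case False
        have E: "{f\<in>W \<sigma>. bnd h f \<and> vlin d nsd (img \<sigma> f) = k} = {}"
          using False by (auto simp: img_lin fun_eq_iff) (metis le_add1)
        show ?thesis unfolding E using False by (simp only: if_False sum.empty)
      qed
    qed
    finally show ?thesis .
  qed
  have "inC ds (\<lambda>k. \<Sum>\<sigma><q. if (\<forall>j. vlin d nsd (ms!\<sigma>) j \<le> k j)
        then Lpow (ilin d esd (ms!\<sigma>)) * gf ds (W \<sigma>) (\<lambda>j. k j - vlin d nsd (ms!\<sigma>) j) else 0)"
    by (rule inC_sum[OF nz]) (rule inC_shift[OF nz inC_W])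
  thus ?thesis using ident unfolding ds_def by simp
qed




lemma sum_split_add: "(\<Sum>i<(p::nat) + q. (F i :: 'a::comm_monoid_add)) = (\<Sum>i<p. F i) + (\<Sum>i<q. F (p + i))"
  by (induction q) (simp_all add: add.assoc)

definition join :: "nat \<Rightarrow> (nat \<Rightarrow> 'a) \<Rightarrow> (nat \<Rightarrow> 'a) \<Rightarrow> nat \<Rightarrow> 'a" where
  "join p F G = (\<lambda>i. if i < p then F i else G (i - p))"

lemma vlin_join: "vlin (p + q) (join p C D) (join p f g) = (\<lambda>j. vlin p C f j + vlin q D g j)"
  unfolding vlin_def join_def by (rule ext) (simp add: sum_split_add)

lemma ilin_join: "ilin (p + q) (join p C D) (join p f g) = ilin p C f + ilin q D g"
  unfolding ilin_def join_def by (simp add: sum_split_add)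

lemma vlin_sub: "\<forall>i. a i \<le> b i \<Longrightarrow> vlin h c (\<lambda>i. b i - a i) = (\<lambda>j. vlin h c b j - vlin h c a j)"
proof -
  assume le: "\<forall>i. a i \<le> b i"
  have "b = (\<lambda>i. a i + (b i - a i))" using le by auto
  hence "vlin h c b = (\<lambda>j. vlin h c a j + vlin h c (\<lambda>i. b i - a i) j)"
    by (metis vlin_add)
  thus ?thesis by (auto simp: fun_eq_iff)
qed

lemma vlin_zero_imp:
  assumes "vlin h c a = (\<lambda>_. 0)" "i < h" "c i \<noteq> (\<lambda>_. 0)" shows "a i = 0"
proof (rule ccontr)
  assume a: "a i \<noteq> 0"
  obtain j where j: "c i j \<noteq> 0" using assms(3) by (meson ext)
  have "a i * c i j \<le> vlin h c a j" unfolding vlin_def using assms(2) by (intro member_le_sum) auto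
  thus False using assms(1) a j by simp
qed

lemma GM_lin:
  fixes ds :: "(int \<times> ('r::finite \<Rightarrow> nat)) list"
  assumes sc: "module sc" and nz: "nzds ds" and X: "finite X"
  shows "GM sc ds (\<lambda>k. \<Sum>x\<in>X. sc (F x k) (v x)) k = (\<Sum>x\<in>X. sc (GM (*) ds (F x) k) (v x))"
proof -
  let ?h = "length ds" and ?c = "dc ds" and ?e = "de ds"
  have finL: "finite (Lam ?h ?c k)" using finite_Lam nzds_dc[OF nz] by blast
  have "GM sc ds (\<lambda>k. \<Sum>x\<in>X. sc (F x k) (v x)) k =
      (\<Sum>f\<in>Lam ?h ?c k. \<Sum>x\<in>X. sc (Lpow (ilin ?h ?e f) * F x (\<lambda>j. k j - vlin ?h ?c f j)) (v x))"
    by (simp add: GM_expand'[OF sc nz] module.scale_sum_right[OF sc] module.scale_scale[OF sc])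
  also have "\<dots> = (\<Sum>x\<in>X. \<Sum>f\<in>Lam ?h ?c k. sc (Lpow (ilin ?h ?e f) * F x (\<lambda>j. k j - vlin ?h ?c f j)) (v x))"
    by (rule sum.swap)
  also have "\<dots> = (\<Sum>x\<in>X. sc (GM (*) ds (F x) k) (v x))"
    by (simp add: GM_expand'[OF module_self nz] module.scale_sum_left[OF sc])
  finally show ?thesis .
qed

lemma GM_supp:
  fixes ds :: "(int \<times> ('r::finite \<Rightarrow> nat)) list"
  assumes sc: "module sc" and nz: "nzds ds" and P: "finite {u. P u \<noteq> 0}"
  shows "GM sc ds P k = (\<Sum>u\<in>{u. P u \<noteq> 0}. \<Sum>f\<in>{f. bnd (length ds) f \<and> (\<lambda>j. u j + vlin (length ds) (dc ds) f j) = k}.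
            sc (Lpow (ilin (length ds) (de ds) f)) (P u))"
proof -
  let ?h = "length ds" and ?c = "dc ds" and ?e = "de ds" and ?SP = "{u. P u \<noteq> 0}"
  have finL: "finite (Lam ?h ?c k)" using finite_Lam nzds_dc[OF nz] by blast
  have "GM sc ds P k = (\<Sum>f\<in>Lam ?h ?c k. sc (Lpow (ilin ?h ?e f)) (P (\<lambda>j. k j - vlin ?h ?c f j)))"
    by (rule GM_expand'[OF sc nz])
  also have "\<dots> = (\<Sum>f\<in>Lam ?h ?c k. \<Sum>u\<in>?SP. if u = (\<lambda>j. k j - vlin ?h ?c f j) then sc (Lpow (ilin ?h ?e f)) (P u) else 0)"
  proof (rule sum.cong[OF refl])
    fix f
    show "sc (Lpow (ilin ?h ?e f)) (P (\<lambda>j. k j - vlin ?h ?c f j)) =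
       (\<Sum>u\<in>?SP. if u = (\<lambda>j. k j - vlin ?h ?c f j) then sc (Lpow (ilin ?h ?e f)) (P u) else 0)"
      using P by (cases "P (\<lambda>j. k j - vlin ?h ?c f j) = 0") (simp_all add: module.scale_zero_right[OF sc] sum.delta')
  qed
  also have "\<dots> = (\<Sum>u\<in>?SP. \<Sum>f\<in>Lam ?h ?c k. if u = (\<lambda>j. k j - vlin ?h ?c f j) then sc (Lpow (ilin ?h ?e f)) (P u) else 0)"
    by (rule sum.swap)
  also have "\<dots> = (\<Sum>u\<in>?SP. \<Sum>f\<in>{f. bnd ?h f \<and> (\<lambda>j. u j + vlin ?h ?c f j) = k}. sc (Lpow (ilin ?h ?e f)) (P u))"
  proof (rule sum.cong[OF refl])
    fix u
    have E: "{f\<in>Lam ?h ?c k. u = (\<lambda>j. k j - vlin ?h ?c f j)} = {f. bnd ?h f \<and> (\<lambda>j. u j + vlin ?h ?c f j) = k}"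
    proof (intro set_eqI iffI)
      fix f assume "f \<in> {f\<in>Lam ?h ?c k. u = (\<lambda>j. k j - vlin ?h ?c f j)}"
      thus "f \<in> {f. bnd ?h f \<and> (\<lambda>j. u j + vlin ?h ?c f j) = k}" by (auto simp: Lam_def fun_eq_iff)
    next
      fix f assume "f \<in> {f. bnd ?h f \<and> (\<lambda>j. u j + vlin ?h ?c f j) = k}"
      thus "f \<in> {f\<in>Lam ?h ?c k. u = (\<lambda>j. k j - vlin ?h ?c f j)}" by (auto simp: Lam_def fun_eq_iff) (metis le_add2, metis add_diff_cancel_right')
    qed
    show "(\<Sum>f\<in>Lam ?h ?c k. if u = (\<lambda>j. k j - vlin ?h ?c f j) then sc (Lpow (ilin ?h ?e f)) (P u) else 0) =
      (\<Sum>f\<in>{f. bnd ?h f \<and> (\<lambda>j. u j + vlin ?h ?c f j) = k}. sc (Lpow (ilin ?h ?e f)) (P u))"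
      by (subst sum.inter_filter[OF finL, symmetric]) (simp only: E)
  qed
  finally show ?thesis .
qed

definition zl :: "nat \<Rightarrow> (nat \<Rightarrow> nat) \<Rightarrow> nat \<Rightarrow> nat" where "zl p z = (\<lambda>i. if i < p then z i else 0)"
definition zr :: "nat \<Rightarrow> (nat \<Rightarrow> nat) \<Rightarrow> nat \<Rightarrow> nat" where "zr p z = (\<lambda>i. z (p + i))"

lemma join_split: "join p (zl p z) (zr p z) = z"
  by (auto simp: join_def zl_def zr_def fun_eq_iff)

lemma bnd_zl: "bnd p (zl p z)" by (simp add: bnd_def zl_def)
lemma bnd_zr: "bnd (p + q) z \<Longrightarrow> bnd q (zr p z)" by (simp add: bnd_def zr_def)

lemma zl_join: "bnd p f \<Longrightarrow> zl p (join p f g) = f"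
  by (auto simp: bnd_def zl_def join_def fun_eq_iff)
lemma zr_join: "zr p (join p f g) = g"
  by (auto simp: zr_def join_def fun_eq_iff)
lemma bnd_join: "bnd q g \<Longrightarrow> bnd (p + q) (join p f g)"
  by (auto simp: bnd_def join_def)

lemma vlin_zc: "vlin h (\<lambda>_ _. 0) f = (\<lambda>_. 0)" by (simp add: vlin_def)

lemma vlin_join_z: "vlin (p + q) C z = (\<lambda>j. vlin p (\<lambda>i. C i) (zl p z) j + vlin q (\<lambda>i. C (p + i)) (zr p z) j)"
  unfolding vlin_def zl_def zr_def by (rule ext) (simp add: sum_split_add)

lemma ilin_neg: "(\<forall>i<h. e i < 0) \<Longrightarrow> i0 < h \<Longrightarrow> f i0 \<noteq> 0 \<Longrightarrow> ilin h e f < 0"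
proof -
  assume e: "\<forall>i<h. e i < 0" and i0: "i0 < h" "f i0 \<noteq> 0"
  have "0 < (\<Sum>i<h. - (int (f i) * e i))"
    using e i0 by (intro sum_pos2[of _ i0]) (auto simp: mult_nonneg_nonpos mult_pos_neg)
  thus ?thesis by (simp add: ilin_def sum_negf)
qed

lemma ilin_nonpos: "(\<forall>i<h. e i \<le> 0) \<Longrightarrow> ilin h e f \<le> 0"
  unfolding ilin_def by (intro sum_nonpos) (auto simp: mult_nonneg_nonpos)

theorem lemma5p1:
  fixes sM :: "zloc \<Rightarrow> 'm::ab_group_add \<Rightarrow> 'm"
    and sN :: "zloc \<Rightarrow> 'n::ab_group_add \<Rightarrow> 'n"
    and sP :: "zloc \<Rightarrow> 'p::ab_group_add \<Rightarrow> 'p"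
    and t :: "'m \<Rightarrow> 'n \<Rightarrow> 'p"
    and a :: "('r::finite \<Rightarrow> nat) \<Rightarrow> 'm"
    and b :: "('r \<Rightarrow> nat) \<Rightarrow> 'n"
  assumes "module sM" and "module sN" and "module sP"
    and "zloc_bilinear sM sN sP t"
    and "is_int sM a" and "is_ssr sN b"
  shows "is_int sP (\<lambda>k. t (a k) (b k))"
proof -
  note mM = assms(1) and mN = assms(2) and mP = assms(3)
  have hom1: "module_hom sM sP (\<lambda>x. t x y)" for y using assms(4) by (simp add: zloc_bilinear_def)
  have hom2: "module_hom sN sP (t x)" for x using assms(4) by (simp add: zloc_bilinear_def)
  obtain P dsA where P: "finite {k. P k \<noteq> 0}" and dsA: "\<forall>(m, n)\<in>set dsA. m < 0 \<and> n \<noteq> (\<lambda>_. 0)"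
    and aeq: "a = GM sM dsA P"
    using assms(5) by (auto simp: is_int_def localized_series_def)
  obtain Q dsB where Q: "finite {k. Q k \<noteq> 0}" and dsB: "\<forall>(m, n)\<in>set dsB. m \<le> 0 \<and> n \<noteq> (\<lambda>_. 0)"
    and beq: "b = GM sN dsB Q"
    using assms(6) by (auto simp: is_ssr_def localized_series_def)
  define p where "p = length dsA"
  define qb where "qb = length dsB"
  define d where "d = p + qb"
  define cA where "cA = dc dsA"
  define eA where "eA = de dsA"
  define cB where "cB = dc dsB"
  define eB where "eB = de dsB"
  have nzA: "nzds dsA" using dsA by (auto simp: nzds_def)
  have nzB: "nzds dsB" using dsB by (auto simp: nzds_def)
  have cA0: "cA i \<noteq> (\<lambda>_. 0)" if "i < p" for i using nzds_dc[OF nzA] that by (simp add: cA_def p_def)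
  have cB0: "cB i \<noteq> (\<lambda>_. 0)" if "i < qb" for i using nzds_dc[OF nzB] that by (simp add: cB_def qb_def)
  have eAn: "\<forall>i<p. eA i < 0" using dsA by (auto simp: eA_def de_def p_def dest!: nth_mem)
  have eBn: "\<forall>i<qb. eB i \<le> 0" using dsB by (auto simp: eB_def de_def qb_def dest!: nth_mem)
  define nsd1 :: "nat \<Rightarrow> 'r \<Rightarrow> nat" where "nsd1 = join p cA (\<lambda>_ _. 0)"
  define nsd2 :: "nat \<Rightarrow> 'r \<Rightarrow> nat" where "nsd2 = join p (\<lambda>_ _. 0) cB"
  define esd where "esd = join p eA eB"
  have d1: "vlin d nsd1 z = vlin p cA (zl p z)" for z
    unfolding d_def vlin_join_z by (simp add: nsd1_def join_def vlin_zc) (rule vlin_cong; simp)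
  have d2: "vlin d nsd2 z = vlin qb cB (zr p z)" for z
  proof -
    have z: "vlin p (\<lambda>i. if i < p then (\<lambda>_. 0) else cB (i - p)) f = (\<lambda>_. 0)" for f
      by (subst vlin_cong[of p _ "\<lambda>_ _. 0"]) (simp_all add: vlin_zc)
    show ?thesis unfolding d_def vlin_join_z by (simp add: nsd2_def join_def z)
  qed
  have e12: "ilin d esd z = ilin p eA (zl p z) + ilin qb eB (zr p z)" for z
    using ilin_join[of p qb eA eB "zl p z" "zr p z"] unfolding join_split d_def esd_def .
  define K where "K = {z. bnd d z \<and> vlin d nsd1 z = vlin d nsd2 z}"
  define S where "S = (\<lambda>u w. {z. bnd d z \<and> (\<lambda>j. u j + vlin d nsd1 z j) = (\<lambda>j. w j + vlin d nsd2 z j)})"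
  have bK: "\<forall>z\<in>K. bnd d z" by (auto simp: K_def)
  obtain gs where gs: "set gs = Minset (K - {\<lambda>_. 0})"
    using finite_list[OF finite_Minset[of "K - {\<lambda>_. 0}" d]] bK by blast
  define ds where "ds = map (\<lambda>g. (ilin d esd g, vlin d nsd1 g)) gs"
  have zero_crit: "z = (\<lambda>_. 0)" if "bnd d z" "vlin d nsd1 z = (\<lambda>_. 0)" "vlin d nsd2 z = (\<lambda>_. 0)" for z
  proof -
    have l: "zl p z = (\<lambda>_. 0)"
    proof
      fix i show "zl p z i = (\<lambda>_. 0) i"
      proof (cases "i < p")
        case True thus ?thesis using vlin_zero_imp[of p cA "zl p z" i] that(2) cA0 d1 by simp
      qed (simp add: zl_def)
    qed
    have r: "zr p z = (\<lambda>_. 0)"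
    proof
      fix i show "zr p z i = (\<lambda>_. 0) i"
      proof (cases "i < qb")
        case True thus ?thesis using vlin_zero_imp[of qb cB "zr p z" i] that(3) cB0 d2 by simp
      next
        case False thus ?thesis using that(1) by (simp add: zr_def bnd_def d_def)
      qed
    qed
    show ?thesis using join_split[of p z] l r by (simp add: join_def)
  qed
  have Knz: "vlin d nsd1 z \<noteq> (\<lambda>_. 0)" if "z \<in> K" "z \<noteq> (\<lambda>_. 0)" for z
    using zero_crit that by (auto simp: K_def)
  have Kneg: "ilin d esd z < 0" if "z \<in> K" "z \<noteq> (\<lambda>_. 0)" for z
  proof -
    have "\<exists>i<p. zl p z i \<noteq> 0"
    proof (rule ccontr)
      assume "\<not> (\<exists>i<p. zl p z i \<noteq> 0)"
      hence "zl p z = (\<lambda>_. 0)" by (auto simp: zl_def fun_eq_iff)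
      hence "vlin d nsd1 z = (\<lambda>_. 0)" using d1 by (simp add: vlin_zero)
      thus False using Knz that by blast
    qed
    then obtain i0 where "i0 < p" "zl p z i0 \<noteq> 0" by blast
    hence "ilin p eA (zl p z) < 0" using ilin_neg eAn by blast
    moreover have "ilin qb eB (zr p z) \<le> 0" using ilin_nonpos eBn by blast
    ultimately show ?thesis using e12 by simp
  qed
  have gsK: "g \<in> K" "g \<noteq> (\<lambda>_. 0)" if "g \<in> set gs" for g using that gs by (auto simp: Minset_def)
  have nz: "nzds ds" unfolding nzds_def ds_def using gsK Knz by auto
  have negds: "\<forall>(m, n)\<in>set ds. m < 0 \<and> n \<noteq> (\<lambda>_. 0)" unfolding ds_def using gsK Knz Kneg by auto
  have lat: "inC ds (\<lambda>k. \<Sum>z\<in>{z\<in>S u w. vlin d nsd1 z = k}. Lpow (ilin d esd z))" for u w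
    unfolding ds_def
  proof (rule lattice[where K=K and d=d])
    show "\<forall>z\<in>K. bnd d z" by (fact bK)
    show "\<forall>z\<in>S u w. bnd d z" by (auto simp: S_def)
    show "(\<lambda>_. 0) \<in> K" by (simp add: K_def bnd_def vlin_zero)
    show "(\<lambda>i. x i + y i) \<in> K" if "x \<in> K" "y \<in> K" for x y
      using that by (auto simp: K_def bnd_def vlin_add)
    show "(\<lambda>i. y i - x i) \<in> K" if "x \<in> K" "y \<in> K" "\<forall>i. x i \<le> y i" for x y
      using that by (auto simp: K_def bnd_def vlin_sub)
    show "(\<lambda>i. z i + x i) \<in> S u w" if "z \<in> S u w" "x \<in> K" for z x
      using that by (auto simp: K_def S_def bnd_def vlin_add fun_eq_iff)
    show "(\<lambda>i. z' i - z i) \<in> K" if z: "z \<in> S u w" and z': "z' \<in> S u w" and le: "\<forall>i. z i \<le> z' i" for z z'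
    proof -
      have m1: "vlin d nsd1 z j \<le> vlin d nsd1 z' j" and m2: "vlin d nsd2 z j \<le> vlin d nsd2 z' j" for j
        by (rule vlin_mono[OF le])+
      have e: "u j + vlin d nsd1 z j = w j + vlin d nsd2 z j" "u j + vlin d nsd1 z' j = w j + vlin d nsd2 z' j" for j
        using z z' by (auto simp: S_def fun_eq_iff)
      have "vlin d nsd1 z' j - vlin d nsd1 z j = vlin d nsd2 z' j - vlin d nsd2 z j" for j
        using e[of j] m1[of j] m2[of j] by arith
      thus ?thesis using z z' le by (auto simp: K_def S_def bnd_def vlin_sub fun_eq_iff)
    qed
    show "vlin d nsd1 x \<noteq> (\<lambda>_. 0)" if "x \<in> K" "x \<noteq> (\<lambda>_. 0)" for x using Knz that .
    show "set gs = Minset (K - {\<lambda>_. 0})" by (fact gs)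
  qed
  define H where "H = (\<lambda>u w k. \<Sum>z\<in>{z\<in>S u w. (\<lambda>j. u j + vlin d nsd1 z j) = k}. Lpow (ilin d esd z))"
  have inH: "inC ds (H u w)" for u w
  proof -
    have "H u w = (\<lambda>k. if (\<forall>j. u j \<le> k j) then 1 * (\<Sum>z\<in>{z\<in>S u w. vlin d nsd1 z = (\<lambda>j. k j - u j)}. Lpow (ilin d esd z)) else 0)"
    proof
      fix k
      show "H u w k = (if (\<forall>j. u j \<le> k j) then 1 * (\<Sum>z\<in>{z\<in>S u w. vlin d nsd1 z = (\<lambda>j. k j - u j)}. Lpow (ilin d esd z)) else 0)"
      proof (cases "\<forall>j. u j \<le> k j")
        case True
        have "{z\<in>S u w. (\<lambda>j. u j + vlin d nsd1 z j) = k} = {z\<in>S u w. vlin d nsd1 z = (\<lambda>j. k j - u j)}"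
          using True by (auto simp: fun_eq_iff) (metis add_diff_cancel_left')+
        thus ?thesis using True by (simp add: H_def)
      next
        case False
        have E: "{z\<in>S u w. (\<lambda>j. u j + vlin d nsd1 z j) = k} = {}"
          using False by (auto simp: fun_eq_iff) (metis le_add1)
        show ?thesis unfolding H_def E using False by (simp only: sum.empty if_False)
      qed
    qed
    thus ?thesis using inC_shift[OF nz lat[of u w], of u 1] by simp
  qed
  define Rf where "Rf = (\<lambda>u w. SOME R. finite {k. R k \<noteq> 0} \<and> H u w = GM (*) ds R)"
  have Rf: "finite {k. Rf u w k \<noteq> 0} \<and> H u w = GM (*) ds (Rf u w)" for u w
  proof -
    have "\<exists>R. finite {k. R k \<noteq> 0} \<and> H u w = GM (*) ds R" using inH[of u w] by (simp add: inC_def)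
    from someI_ex[OF this] show ?thesis unfolding Rf_def .
  qed
  define SP where "SP = {u. P u \<noteq> 0}"
  define SQ where "SQ = {w. Q w \<noteq> 0}"
  define X where "X = SP \<times> SQ"
  have finX: "finite X" using P Q by (simp add: X_def SP_def SQ_def)
  define R where "R = (\<lambda>k. \<Sum>x\<in>X. sP (Rf (fst x) (snd x) k) (t (P (fst x)) (Q (snd x))))"
  have finR: "finite {k. R k \<noteq> 0}"
  proof (rule finite_subset)
    show "{k. R k \<noteq> 0} \<subseteq> (\<Union>x\<in>X. {k. Rf (fst x) (snd x) k \<noteq> 0})"
    proof
      fix k assume "k \<in> {k. R k \<noteq> 0}"
      hence "R k \<noteq> 0" by simp
      then obtain x where x: "x \<in> X" "sP (Rf (fst x) (snd x) k) (t (P (fst x)) (Q (snd x))) \<noteq> 0"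
        unfolding R_def by (meson sum.neutral)
      have "Rf (fst x) (snd x) k \<noteq> 0"
      proof
        assume "Rf (fst x) (snd x) k = 0"
        thus False using x(2) module.scale_zero_left[OF mP] by simp
      qed
      thus "k \<in> (\<Union>x\<in>X. {k. Rf (fst x) (snd x) k \<noteq> 0})" using x(1) by blast
    qed
    show "finite (\<Union>x\<in>X. {k. Rf (fst x) (snd x) k \<noteq> 0})"
      by (rule finite_UN_I[OF finX]) (use Rf in blast)
  qed
  have GMR: "GM sP ds R k = (\<Sum>x\<in>X. sP (H (fst x) (snd x) k) (t (P (fst x)) (Q (snd x))))" for k
    unfolding R_def GM_lin[OF mP nz finX] using Rf by simp
  have key: "t (a k) (b k) = (\<Sum>x\<in>X. sP (H (fst x) (snd x) k) (t (P (fst x)) (Q (snd x))))" for k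
  proof -
    define FA where "FA = (\<lambda>u. {f. bnd p f \<and> (\<lambda>j. u j + vlin p cA f j) = k})"
    define FB where "FB = (\<lambda>w. {g. bnd qb g \<and> (\<lambda>j. w j + vlin qb cB g j) = k})"
    have ak: "a k = (\<Sum>u\<in>SP. \<Sum>f\<in>FA u. sM (Lpow (ilin p eA f)) (P u))"
      unfolding aeq GM_supp[OF mM nzA P] SP_def FA_def p_def cA_def eA_def ..
    have bk: "b k = (\<Sum>w\<in>SQ. \<Sum>g\<in>FB w. sN (Lpow (ilin qb eB g)) (Q w))"
      unfolding beq GM_supp[OF mN nzB Q] SQ_def FB_def qb_def cB_def eB_def ..
    have tb: "t x (b k) = (\<Sum>w\<in>SQ. \<Sum>g\<in>FB w. sP (Lpow (ilin qb eB g)) (t x (Q w)))" for x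
      unfolding bk by (simp add: module_hom.sum[OF hom2] module_hom.scale[OF hom2])
    have hw: "sP (H u w k) v = (\<Sum>f\<in>FA u. \<Sum>g\<in>FB w. sP (Lpow (ilin p eA f) * Lpow (ilin qb eB g)) v)" for u w v
    proof -
      have bij: "bij_betw (\<lambda>(f, g). join p f g) (FA u \<times> FB w) {z\<in>S u w. (\<lambda>j. u j + vlin d nsd1 z j) = k}"
      proof (rule bij_betw_byWitness[where f' = "\<lambda>z. (zl p z, zr p z)"])
        show "\<forall>x\<in>FA u \<times> FB w. (zl p ((\<lambda>(f, g). join p f g) x), zr p ((\<lambda>(f, g). join p f g) x)) = x"
          by (auto simp: FA_def zl_join zr_join)
        show "\<forall>z\<in>{z\<in>S u w. (\<lambda>j. u j + vlin d nsd1 z j) = k}. (\<lambda>(f, g). join p f g) (zl p z, zr p z) = z"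
          by (simp add: join_split)
        show "(\<lambda>(f, g). join p f g) ` (FA u \<times> FB w) \<subseteq> {z\<in>S u w. (\<lambda>j. u j + vlin d nsd1 z j) = k}"
        proof (rule subsetI)
          fix z assume "z \<in> (\<lambda>(f, g). join p f g) ` (FA u \<times> FB w)"
          then obtain f g where f: "f \<in> FA u" and g: "g \<in> FB w" and zj: "z = join p f g" by auto
          have bf: "bnd p f" and fe: "(\<lambda>j. u j + vlin p cA f j) = k" using f by (auto simp: FA_def)
          have bg: "bnd qb g" and ge: "(\<lambda>j. w j + vlin qb cB g j) = k" using g by (auto simp: FB_def)
          have v1: "vlin d nsd1 (join p f g) = vlin p cA f" using d1 zl_join[OF bf] by simp
          have v2: "vlin d nsd2 (join p f g) = vlin qb cB g" using d2 zr_join by simp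
          have "join p f g \<in> S u w" "(\<lambda>j. u j + vlin d nsd1 (join p f g) j) = k"
            unfolding S_def using bnd_join[OF bg, of p f] fe ge v1 v2 by (simp_all add: d_def)
          thus "z \<in> {z\<in>S u w. (\<lambda>j. u j + vlin d nsd1 z j) = k}" using zj by simp
        qed
        show "(\<lambda>z. (zl p z, zr p z)) ` {z\<in>S u w. (\<lambda>j. u j + vlin d nsd1 z j) = k} \<subseteq> FA u \<times> FB w"
        proof (rule image_subsetI)
          fix z assume "z \<in> {z\<in>S u w. (\<lambda>j. u j + vlin d nsd1 z j) = k}"
          hence z: "z \<in> S u w" and ze: "(\<lambda>j. u j + vlin d nsd1 z j) = k" by auto
          have bz: "bnd (p + qb) z" and se: "(\<lambda>j. u j + vlin d nsd1 z j) = (\<lambda>j. w j + vlin d nsd2 z j)"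
            using z by (auto simp: S_def d_def)
          have "zl p z \<in> FA u" unfolding FA_def using bnd_zl ze d1 by simp
          moreover have "zr p z \<in> FB w" unfolding FB_def using bnd_zr[OF bz] ze se d2 by simp
          ultimately show "(zl p z, zr p z) \<in> FA u \<times> FB w" by simp
        qed
      qed
      have eps: "ilin d esd (join p f g) = ilin p eA f + ilin qb eB g" if "f \<in> FA u" for f g
        using e12[of "join p f g"] zl_join[of p f g] zr_join[of p f g] that by (simp add: FA_def)
      have "sP (H u w k) v = (\<Sum>z\<in>{z\<in>S u w. (\<lambda>j. u j + vlin d nsd1 z j) = k}. sP (Lpow (ilin d esd z)) v)"
        unfolding H_def by (rule module.scale_sum_left[OF mP])
      also have "\<dots> = (\<Sum>x\<in>FA u \<times> FB w. sP (Lpow (ilin d esd ((\<lambda>(f, g). join p f g) x))) v)"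
        by (rule sum.reindex_bij_betw[OF bij, symmetric])
      also have "\<dots> = (\<Sum>x\<in>FA u \<times> FB w. sP (Lpow (ilin p eA (fst x)) * Lpow (ilin qb eB (snd x))) v)"
        by (rule sum.cong[OF refl]) (auto simp: eps Lpow_add)
      also have "\<dots> = (\<Sum>f\<in>FA u. \<Sum>g\<in>FB w. sP (Lpow (ilin p eA f) * Lpow (ilin qb eB g)) v)"
        by (simp add: sum.cartesian_product split_beta)
      finally show ?thesis .
    qed
    have "t (a k) (b k) = (\<Sum>u\<in>SP. \<Sum>f\<in>FA u. sP (Lpow (ilin p eA f)) (t (P u) (b k)))"
      unfolding ak by (simp add: module_hom.sum[OF hom1] module_hom.scale[OF hom1])
    also have "\<dots> = (\<Sum>u\<in>SP. \<Sum>f\<in>FA u. \<Sum>w\<in>SQ. \<Sum>g\<in>FB w. sP (Lpow (ilin p eA f) * Lpow (ilin qb eB g)) (t (P u) (Q w)))"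
      by (simp add: tb module.scale_sum_right[OF mP] module.scale_scale[OF mP])
    also have "\<dots> = (\<Sum>u\<in>SP. \<Sum>w\<in>SQ. \<Sum>f\<in>FA u. \<Sum>g\<in>FB w. sP (Lpow (ilin p eA f) * Lpow (ilin qb eB g)) (t (P u) (Q w)))"
      by (rule sum.cong[OF refl]) (rule sum.swap)
    also have "\<dots> = (\<Sum>u\<in>SP. \<Sum>w\<in>SQ. sP (H u w k) (t (P u) (Q w)))"
      by (simp add: hw)
    also have "\<dots> = (\<Sum>x\<in>X. sP (H (fst x) (snd x) k) (t (P (fst x)) (Q (snd x))))"
      by (simp add: X_def sum.cartesian_product split_beta)
    finally show ?thesis .
  qed
  have feq: "(\<lambda>k. t (a k) (b k)) = GM sP ds R"
  proof
    fix k show "t (a k) (b k) = GM sP ds R k" by (simp only: key GMR)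
  qed
  show ?thesis unfolding is_int_def localized_series_def
    by (intro exI[of _ R] exI[of _ ds] conjI finR negds feq)
qed


end
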